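(* Assume $\|\Sigma_1\|\le C$ for a universal constant $C$, $\frac1{p^2}\operatorname{var}(\mathbf A_{12}^\top\mathbf A_{13})\to0$, and $p,n\to\infty$ with $p/n\to c\in(0,\infty)$. Then $$\frac1p\,\mathbb E\|\mathbf M_3-\Sigma_3\|_F^2\to0 .$$
   Context: Setting. For each $n$, let $p=p_n$ and $\mathbf x_1,\dots,\mathbf x_n\in\mathbb R^p$ i.i.d. with an absolutely continuous distribution. $\mathbf A_{ij}=\operatorname{sign}(\mathbf x_i-\mathbf x_j)$ (componentwise sign), $\mathbf A_i=\mathbb E\{\operatorname{sign}(\mathbf x_i-\mathbf x)\mid\mathbf x_i\}$ with $\mathbf x$ an independent copy of $\mathbf x_1$, $\Sigma_1=\operatorname{cov}(\mathbf A_{ij})$ ($i\ne j$), $\Sigma_2=\operatorname{cov}(\mathbf A_i)$, $\Sigma_3=\Sigma_1-2\Sigma_2$ (which equals $\operatorname{cov}(\epsilon_{ij})$). Define $\epsilon_{ij}=\mathbf A_{ij}-\mathbf A_i+\mathbf A_j$ and $\mathbf M_3=\frac{2}{n(n-1)}\sum_{1\le i<j\le n}\epsilon_{ij}\epsilon_{ij}^{\top}$. $\|\cdot\|$ is the spectral norm and $\|\cdot\|_F$ the Frobenius norm. *)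

theory Defs
  imports "HOL-Probability.Probability"
begin

text \<open>Vectors of R^p are represented as functions nat => real; only coordinates k < p matter.
  The ambient measurable space / Lebesgue measure on R^p is PiM {..<p} (%_. lborel).\<close>

definition Rp :: "nat \<Rightarrow> (nat \<Rightarrow> real) measure" where
  "Rp p = PiM {..<p} (\<lambda>_. lborel)"

text \<open>Componentwise sign of x - y (the matrix A_ij = sign(x_i - x_j)).\<close>
definition sgnv :: "nat \<Rightarrow> (nat \<Rightarrow> real) \<Rightarrow> (nat \<Rightarrow> real) \<Rightarrow> nat \<Rightarrow> real" where
  "sgnv p x y = (\<lambda>k. if k < p then sgn (x k - y k) else 0)"

text \<open>A_i = E[sign(x_i - x) | x_i], evaluated at x_i = x, with x ~ mu.\<close>
definition Avec :: "nat \<Rightarrow> (nat \<Rightarrow> real) measure \<Rightarrow> (nat \<Rightarrow> real) \<Rightarrow> nat \<Rightarrow> real" where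
  "Avec p \<mu> x = (\<lambda>k. \<integral>y. sgnv p x y k \<partial>\<mu>)"

definition covm :: "'a measure \<Rightarrow> ('a \<Rightarrow> nat \<Rightarrow> real) \<Rightarrow> nat \<Rightarrow> nat \<Rightarrow> real" where
  "covm M V k l = (\<integral>\<omega>. V \<omega> k * V \<omega> l \<partial>M) - (\<integral>\<omega>. V \<omega> k \<partial>M) * (\<integral>\<omega>. V \<omega> l \<partial>M)"

definition Sigma1 :: "nat \<Rightarrow> (nat \<Rightarrow> real) measure \<Rightarrow> nat \<Rightarrow> nat \<Rightarrow> real" where
  "Sigma1 p \<mu> = covm (\<mu> \<Otimes>\<^sub>M \<mu>) (\<lambda>(x, y). sgnv p x y)"

definition Sigma2 :: "nat \<Rightarrow> (nat \<Rightarrow> real) measure \<Rightarrow> nat \<Rightarrow> nat \<Rightarrow> real" where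
  "Sigma2 p \<mu> = covm \<mu> (Avec p \<mu>)"

definition Sigma3 :: "nat \<Rightarrow> (nat \<Rightarrow> real) measure \<Rightarrow> nat \<Rightarrow> nat \<Rightarrow> real" where
  "Sigma3 p \<mu> = (\<lambda>k l. Sigma1 p \<mu> k l - 2 * Sigma2 p \<mu> k l)"

definition epsv :: "nat \<Rightarrow> (nat \<Rightarrow> real) measure \<Rightarrow> (nat \<Rightarrow> nat \<Rightarrow> real) \<Rightarrow> nat \<Rightarrow> nat \<Rightarrow> nat \<Rightarrow> real" where
  "epsv p \<mu> X i j = (\<lambda>k. sgnv p (X i) (X j) k - Avec p \<mu> (X i) k + Avec p \<mu> (X j) k)"

definition M3 :: "nat \<Rightarrow> nat \<Rightarrow> (nat \<Rightarrow> real) measure \<Rightarrow> (nat \<Rightarrow> nat \<Rightarrow> real) \<Rightarrow> nat \<Rightarrow> nat \<Rightarrow> real" where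
  "M3 n p \<mu> X = (\<lambda>k l. 2 / (real n * (real n - 1)) *
      (\<Sum>j<n. \<Sum>i<j. epsv p \<mu> X i j k * epsv p \<mu> X i j l))"

definition frob_sq :: "nat \<Rightarrow> (nat \<Rightarrow> nat \<Rightarrow> real) \<Rightarrow> real" where
  "frob_sq p M = (\<Sum>k<p. \<Sum>l<p. (M k l)\<^sup>2)"

definition spec_norm :: "nat \<Rightarrow> (nat \<Rightarrow> nat \<Rightarrow> real) \<Rightarrow> real" where
  "spec_norm p M = Sup {sqrt (\<Sum>k<p. (\<Sum>l<p. M k l * v l)\<^sup>2) | v. (\<Sum>l<p. (v l)\<^sup>2) = 1}"

definition varA :: "nat \<Rightarrow> (nat \<Rightarrow> real) measure \<Rightarrow> real" where
  "varA p \<mu> = (let T = (\<lambda>(x, y, z). \<Sum>k<p. sgnv p x y k * sgnv p x z k);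
                  M = \<mu> \<Otimes>\<^sub>M (\<mu> \<Otimes>\<^sub>M \<mu>)
              in \<integral>\<omega>. (T \<omega> - (\<integral>\<omega>'. T \<omega>' \<partial>M))\<^sup>2 \<partial>M)"

end

theory Submission
  imports Defs "HOL-Real_Asymp.Real_Asymp"
begin

definition bdd :: "('a \<Rightarrow> real) \<Rightarrow> bool" where
  "bdd f \<longleftrightarrow> (\<exists>B. \<forall>x. \<bar>f x\<bar> \<le> B)"

lemma bdd_const[intro!]: "bdd (\<lambda>x. c)" unfolding bdd_def by auto
lemma bdd_add[intro!]: "bdd f \<Longrightarrow> bdd g \<Longrightarrow> bdd (\<lambda>x. f x + g x)"
proof -
  assume "bdd f" "bdd g"
  then obtain B C where B: "\<And>x. \<bar>f x\<bar> \<le> B" and C: "\<And>x. \<bar>g x\<bar> \<le> C" unfolding bdd_def by auto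
  show ?thesis unfolding bdd_def
    by (rule exI[of _ "B+C"]) (auto intro!: abs_triangle_ineq[THEN order_trans] add_mono B C)
qed
lemma bdd_diff[intro!]: "bdd f \<Longrightarrow> bdd g \<Longrightarrow> bdd (\<lambda>x. f x - g x)"
proof -
  assume "bdd f" "bdd g"
  then obtain B C where B: "\<And>x. \<bar>f x\<bar> \<le> B" and C: "\<And>x. \<bar>g x\<bar> \<le> C" unfolding bdd_def by auto
  show ?thesis unfolding bdd_def
    by (rule exI[of _ "B+C"]) (auto intro!: abs_triangle_ineq4[THEN order_trans] add_mono B C)
qed
lemma bdd_uminus[intro!]: "bdd f \<Longrightarrow> bdd (\<lambda>x. - f x)"
  unfolding bdd_def by auto
lemma bdd_mult[intro!]: "bdd f \<Longrightarrow> bdd g \<Longrightarrow> bdd (\<lambda>x. f x * g x)"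
proof -
  assume "bdd f" "bdd g"
  then obtain B C where B: "\<And>x. \<bar>f x\<bar> \<le> B" and C: "\<And>x. \<bar>g x\<bar> \<le> C" unfolding bdd_def by auto
  show ?thesis unfolding bdd_def
    by (rule exI[of _ "B*C"]) (auto simp: abs_mult intro!: mult_mono B C order_trans[OF abs_ge_zero B])
qed
lemma bdd_pow2[intro!]: "bdd f \<Longrightarrow> bdd (\<lambda>x. (f x)\<^sup>2)"
  unfolding power2_eq_square by (rule bdd_mult)
lemma bdd_sum[intro!]: "(\<And>i. i \<in> I \<Longrightarrow> bdd (f i)) \<Longrightarrow> bdd (\<lambda>x. \<Sum>i\<in>I. f i x)"
proof (induction I rule: infinite_finite_induct)
  case (insert i I) then show ?case using bdd_add[of "f i" "\<lambda>x. \<Sum>i\<in>I. f i x"] by auto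
qed auto
lemma bdd_split[intro!]: "bdd (\<lambda>z. f (fst z) (snd z)) \<Longrightarrow> bdd (case_prod f)"
  unfolding bdd_def by (auto simp: split_beta)
lemma bdd_comp: "bdd f \<Longrightarrow> bdd (\<lambda>x. f (g x))" unfolding bdd_def by auto

lemma (in finite_measure) bdd_intg: "f \<in> borel_measurable M \<Longrightarrow> bdd f \<Longrightarrow> integrable M f"
proof -
  assume f: "f \<in> borel_measurable M" "bdd f"
  then obtain B where "\<And>x. \<bar>f x\<bar> \<le> B" unfolding bdd_def by auto
  then show ?thesis by (intro integrable_const_bound[where B=B] f) auto
qed

lemma bdd_integral[intro!]: assumes "prob_space N" "bdd (case_prod f)" shows "bdd (\<lambda>x. \<integral>y. f x y \<partial>N)"
proof -
  interpret prob_space N by fact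
  obtain B where B: "\<And>x y. \<bar>f x y\<bar> \<le> B" using assms(2) unfolding bdd_def by auto
  have "\<bar>\<integral>y. f x y \<partial>N\<bar> \<le> B" for x
  proof -
    have "\<bar>\<integral>y. f x y \<partial>N\<bar> \<le> (\<integral>y. \<bar>f x y\<bar> \<partial>N)" by (rule integral_abs_bound)
    also have "\<dots> \<le> B"
      by (cases "integrable N (\<lambda>y. \<bar>f x y\<bar>)")
        (auto intro!: integral_le_const B simp: not_integrable_integral_eq order_trans[OF abs_ge_zero B])
    finally show ?thesis .
  qed
  then show ?thesis unfolding bdd_def by auto
qed

locale S = prob_space M for M :: "(nat \<Rightarrow> real) measure" +
  fixes P :: nat
  assumes sets_M: "sets M = sets (Rp P)"
begin

lemma comp_meas[measurable]: "k < P \<Longrightarrow> (\<lambda>x. x k) \<in> borel_measurable M"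
proof -
  assume "k < P"
  then have "(\<lambda>x. x k) \<in> measurable (Rp P) lborel" unfolding Rp_def
    by (intro measurable_component_singleton) auto
  then have "(\<lambda>x. x k) \<in> measurable (Rp P) borel" by simp
  then show ?thesis using measurable_cong_sets[OF sets_M refl, of borel] by blast
qed

lemma meas_sgnv[measurable (raw)]:
  "f \<in> measurable N M \<Longrightarrow> g \<in> measurable N M \<Longrightarrow> (\<lambda>\<omega>. sgnv P (f \<omega>) (g \<omega>) k) \<in> borel_measurable N"
  unfolding sgnv_def by (cases "k < P") auto

abbreviation A where "A \<equiv> Avec P M"

lemma meas_A[measurable (raw)]:
  "f \<in> measurable N M \<Longrightarrow> (\<lambda>\<omega>. A (f \<omega>) k) \<in> borel_measurable N"
proof -
  assume f: "f \<in> measurable N M"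
  have "(\<lambda>x. \<integral>y. sgnv P x y k \<partial>M) \<in> borel_measurable M" by measurable
  then show ?thesis using f unfolding Avec_def by measurable
qed

lemma abs_sgnv: "\<bar>sgnv P x y k\<bar> \<le> 1" unfolding sgnv_def by (auto simp: sgn_if)
lemma bdd_sgnv[intro!]: "bdd (\<lambda>z. sgnv P (f z) (g z) k)" unfolding bdd_def using abs_sgnv by blast
lemma abs_A: "\<bar>A x k\<bar> \<le> 1"
proof -
  have "\<bar>\<integral>y. sgnv P x y k \<partial>M\<bar> \<le> (\<integral>y. \<bar>sgnv P x y k\<bar> \<partial>M)" by (rule integral_abs_bound)
  also have "\<dots> \<le> 1"
    by (cases "integrable M (\<lambda>y. \<bar>sgnv P x y k\<bar>)")
      (auto intro!: integral_le_const abs_sgnv simp: not_integrable_integral_eq)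
  finally show ?thesis unfolding Avec_def .
qed
lemma bdd_A[intro!]: "bdd (\<lambda>z. A (f z) k)" unfolding bdd_def using abs_A by blast

end

definition bm :: "'a measure \<Rightarrow> ('a \<Rightarrow> real) \<Rightarrow> bool" where
  "bm N f \<longleftrightarrow> f \<in> borel_measurable N \<and> bdd f"

lemma bm_const[simp]: "bm N (\<lambda>x. c)" unfolding bm_def by auto
lemma bm_add[simp]: "bm N f \<Longrightarrow> bm N g \<Longrightarrow> bm N (\<lambda>x. f x + g x)" unfolding bm_def by auto
lemma bm_diff[simp]: "bm N f \<Longrightarrow> bm N g \<Longrightarrow> bm N (\<lambda>x. f x - g x)" unfolding bm_def by auto
lemma bm_mult[simp]: "bm N f \<Longrightarrow> bm N g \<Longrightarrow> bm N (\<lambda>x. f x * g x)" unfolding bm_def by auto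
lemma bm_uminus[simp]: "bm N f \<Longrightarrow> bm N (\<lambda>x. - f x)" unfolding bm_def by auto
lemma bm_pow2[simp]: "bm N f \<Longrightarrow> bm N (\<lambda>x. (f x)\<^sup>2)" unfolding bm_def by auto
lemma bm_sum[simp]: "(\<And>i. i \<in> I \<Longrightarrow> bm N (f i)) \<Longrightarrow> bm N (\<lambda>x. \<Sum>i\<in>I. f i x)"
  unfolding bm_def by (auto intro!: borel_measurable_sum)
lemma bm_integrable[simp]: "finite_measure N \<Longrightarrow> bm N f \<Longrightarrow> integrable N f"
  unfolding bm_def using finite_measure.bdd_intg by blast
lemma bm_comp: "bm N f \<Longrightarrow> g \<in> measurable N' N \<Longrightarrow> bm N' (\<lambda>x. f (g x))"
  unfolding bm_def by (auto intro: bdd_comp)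

context S begin

lemma fm_M[simp]: "finite_measure M" by unfold_locales
lemma pm_MM: "prob_space (M \<Otimes>\<^sub>M M)" by (simp add: prob_space_axioms prob_space_pair)
lemma fm_MM[simp]: "finite_measure (M \<Otimes>\<^sub>M M)" using pm_MM prob_space.finite_measure by blast
lemma ps_MM: "pair_sigma_finite M M" by unfold_locales
lemma id_meas[simp]: "(\<lambda>x. x) \<in> measurable M M" by simp

lemma bm_sgnv[simp]: "f \<in> measurable N M \<Longrightarrow> g \<in> measurable N M \<Longrightarrow> bm N (\<lambda>z. sgnv P (f z) (g z) k)"
  unfolding bm_def by auto
lemma bm_sgnv1[simp]: assumes g[measurable]: "g \<in> measurable N M" shows "bm N (\<lambda>z. sgnv P x (g z) k)"
proof -
  have "(\<lambda>z. sgnv P x (g z) k) \<in> borel_measurable N"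
  proof (cases "k < P")
    case True then show ?thesis unfolding sgnv_def by simp measurable
  qed (simp add: sgnv_def)
  then show ?thesis unfolding bm_def using bdd_sgnv[of "\<lambda>z. x" g k] by simp
qed
lemma bm_sgnv2[simp]: assumes g[measurable]: "f \<in> measurable N M" shows "bm N (\<lambda>z. sgnv P (f z) y k)"
proof -
  have "(\<lambda>z. sgnv P (f z) y k) \<in> borel_measurable N"
  proof (cases "k < P")
    case True then show ?thesis unfolding sgnv_def by simp measurable
  qed (simp add: sgnv_def)
  then show ?thesis unfolding bm_def using bdd_sgnv[of f "\<lambda>z. y" k] by simp
qed
lemma bm_A[simp]: "f \<in> measurable N M \<Longrightarrow> bm N (\<lambda>z. A (f z) k)"
  unfolding bm_def by auto

lemma bm_integral[simp]:
  assumes "bm (N \<Otimes>\<^sub>M M) (\<lambda>z. f (fst z) (snd z))"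
  shows "bm N (\<lambda>x. \<integral>y. f x y \<partial>M)"
proof -
  have "case_prod f \<in> borel_measurable (N \<Otimes>\<^sub>M M)" "bdd (case_prod f)"
    using assms unfolding bm_def by (auto simp: split_beta')
  then show ?thesis unfolding bm_def using prob_space_axioms by (auto intro!: bdd_integral)
qed

lemma fubini:
  assumes "bm (M \<Otimes>\<^sub>M M) (\<lambda>z. f (fst z) (snd z))"
  shows "(\<integral>x. \<integral>y. f x y \<partial>M \<partial>M) = (\<integral>y. \<integral>x. f x y \<partial>M \<partial>M)"
proof -
  have "integrable (M \<Otimes>\<^sub>M M) (case_prod f)"
    using assms by (simp add: split_beta')
  then show ?thesis using pair_sigma_finite.Fubini_integral[OF ps_MM] by metis
qed

lemma sgnv_swap: "sgnv P y x k = - sgnv P x y k"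
  unfolding sgnv_def by (auto simp: sgn_if)

lemma int_sgnv_fst: "(\<integral>x. sgnv P x y k \<partial>M) = - A y k"
  unfolding Avec_def by (simp add: sgnv_swap[of _ y])

lemma int_A: "(\<integral>x. A x k \<partial>M) = 0"
proof -
  have "(\<integral>x. A x k \<partial>M) = (\<integral>x. \<integral>y. sgnv P x y k \<partial>M \<partial>M)" unfolding Avec_def ..
  also have "\<dots> = (\<integral>y. \<integral>x. sgnv P x y k \<partial>M \<partial>M)" by (rule fubini) simp
  also have "\<dots> = - (\<integral>x. A x k \<partial>M)" by (simp add: int_sgnv_fst)
  finally show ?thesis by simp
qed

end

context S begin

definition Sg1 where "Sg1 k l = (\<integral>x. \<integral>y. sgnv P x y k * sgnv P x y l \<partial>M \<partial>M)"
definition G where "G k l = (\<integral>x. A x k * A x l \<partial>M)"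
definition e where "e x y k = sgnv P x y k - A x k + A y k"

lemma int_sgnv[simp]: "(\<integral>y. sgnv P x y k \<partial>M) = A x k" by (simp add: Avec_def)

lemma pair_int:
  assumes "bm (M \<Otimes>\<^sub>M M) f"
  shows "integral\<^sup>L (M \<Otimes>\<^sub>M M) f = (\<integral>x. \<integral>y. f (x, y) \<partial>M \<partial>M)"
  using pair_sigma_finite.integral_fst'[OF ps_MM, of f] assms by simp

lemma split_sgnv: "(case \<omega> of (x, y) \<Rightarrow> sgnv P x y) = sgnv P (fst \<omega>) (snd \<omega>)"
  by (auto simp: split_beta)

lemma Sigma1_eq: "Sigma1 P M k l = Sg1 k l"
proof -
  have "\<And>k. (\<integral>\<omega>. (case \<omega> of (x, y) \<Rightarrow> sgnv P x y) k \<partial>(M \<Otimes>\<^sub>M M)) = 0"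
    unfolding split_sgnv by (subst pair_int) (simp_all add: int_A)
  moreover have "(\<integral>\<omega>. (case \<omega> of (x, y) \<Rightarrow> sgnv P x y) k * (case \<omega> of (x, y) \<Rightarrow> sgnv P x y) l \<partial>(M \<Otimes>\<^sub>M M)) = Sg1 k l"
    unfolding split_sgnv Sg1_def by (subst pair_int) simp_all
  ultimately show ?thesis unfolding Sigma1_def covm_def by simp
qed

lemma Sigma2_eq: "Sigma2 P M k l = G k l"
  unfolding Sigma2_def covm_def G_def by (simp add: int_A)

lemma Sigma3_eq: "Sigma3 P M k l = Sg1 k l - 2 * G k l"
  unfolding Sigma3_def Sigma1_eq Sigma2_eq ..

lemma cross_int: "(\<integral>x. \<integral>y. sgnv P x y k * A y l \<partial>M \<partial>M) = - G k l"
proof -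
  have "(\<integral>x. \<integral>y. sgnv P x y k * A y l \<partial>M \<partial>M) = (\<integral>y. \<integral>x. sgnv P x y k * A y l \<partial>M \<partial>M)"
    by (rule fubini) simp
  also have "\<dots> = (\<integral>y. - (A y k * A y l) \<partial>M)" by (simp add: int_sgnv_fst)
  finally show ?thesis unfolding G_def by simp
qed

lemma F1: "(\<integral>x. \<integral>y. e x y k * e x y l \<partial>M \<partial>M) = Sg1 k l - 2 * G k l"
proof -
  have inner: "(\<integral>y. e x y k * e x y l \<partial>M) = (\<integral>y. sgnv P x y k * sgnv P x y l \<partial>M) - A x k * A x l
     + (\<integral>y. sgnv P x y k * A y l \<partial>M) + (\<integral>y. sgnv P x y l * A y k \<partial>M) + G k l" for x
  proof -
    have "(\<integral>y. e x y k * e x y l \<partial>M) = (\<integral>y. sgnv P x y k * sgnv P x y l - A x l * sgnv P x y k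
       + sgnv P x y k * A y l - A x k * sgnv P x y l + A x k * A x l - A x k * A y l
       + sgnv P x y l * A y k - A x l * A y k + A y k * A y l \<partial>M)"
      unfolding e_def by (rule Bochner_Integration.integral_cong) (simp_all add: algebra_simps)
    also have "\<dots> = (\<integral>y. sgnv P x y k * sgnv P x y l \<partial>M) - A x l * A x k
       + (\<integral>y. sgnv P x y k * A y l \<partial>M) - A x k * A x l + A x k * A x l - A x k * 0
       + (\<integral>y. sgnv P x y l * A y k \<partial>M) - A x l * 0 + G k l"
      by (simp add: int_A G_def prob_space)
    finally show ?thesis by simp
  qed
  have "(\<integral>x. \<integral>y. e x y k * e x y l \<partial>M \<partial>M) = Sg1 k l - G k l + (- G k l) + (- G l k) + G k l"
    unfolding inner by (simp add: Sg1_def[symmetric] G_def[symmetric] cross_int prob_space)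
  also have "G l k = G k l" unfolding G_def by (simp add: mult.commute)
  finally show ?thesis by simp
qed

end

context S begin

lemma ff_meas[simp]:
  "(\<lambda>w. fst (fst w)) \<in> measurable ((M \<Otimes>\<^sub>M N1) \<Otimes>\<^sub>M N2) M"
  "(\<lambda>w. snd (fst w)) \<in> measurable ((N1 \<Otimes>\<^sub>M M) \<Otimes>\<^sub>M N2) M"
  "(\<lambda>w. fst (snd w)) \<in> measurable (N1 \<Otimes>\<^sub>M (M \<Otimes>\<^sub>M N2)) M"
  "(\<lambda>w. snd (snd w)) \<in> measurable (N1 \<Otimes>\<^sub>M (N2 \<Otimes>\<^sub>M M)) M"
  by (rule measurable_compose[OF measurable_fst measurable_fst]
           measurable_compose[OF measurable_fst measurable_snd]
           measurable_compose[OF measurable_snd measurable_fst]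
           measurable_compose[OF measurable_snd measurable_snd])+

lemma jensen: assumes "bm M h" shows "(\<integral>x. h x \<partial>M)\<^sup>2 \<le> (\<integral>x. (h x)\<^sup>2 \<partial>M)"
proof -
  let ?c = "\<integral>x. h x \<partial>M"
  have "0 \<le> (\<integral>x. (h x - ?c)\<^sup>2 \<partial>M)" by simp
  also have "(\<integral>x. (h x - ?c)\<^sup>2 \<partial>M) = (\<integral>x. (h x)\<^sup>2 - 2 * ?c * h x + ?c\<^sup>2 \<partial>M)"
    by (rule Bochner_Integration.integral_cong) (auto simp: power2_diff algebra_simps)
  also have "\<dots> = (\<integral>x. (h x)\<^sup>2 \<partial>M) - ?c\<^sup>2"
    using assms by (simp add: prob_space power2_eq_square)
  finally show ?thesis by simp
qed

lemma imono: assumes "bm M f" "bm M g" "\<And>x. f x \<le> g x"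
  shows "(\<integral>x. f x \<partial>M) \<le> (\<integral>x. g x \<partial>M)"
  using assms by (intro integral_mono) auto

lemma int_const: "(\<integral>x. (c::real) \<partial>M) = c" by (simp add: prob_space)

definition ff where "ff x y z = (\<Sum>k<P. sgnv P x y k * sgnv P x z k)"
definition mm where "mm = (\<integral>x. \<integral>y. \<integral>z. ff x y z \<partial>M \<partial>M \<partial>M)"
definition gg where "gg x y z = ff x y z - mm"
definition b where "b x y k = sgnv P x y k - A x k"

lemma bm_ff[simp]: "f \<in> measurable N M \<Longrightarrow> g \<in> measurable N M \<Longrightarrow> h \<in> measurable N M \<Longrightarrow>
   bm N (\<lambda>w. ff (f w) (g w) (h w))"
  unfolding ff_def by simp
lemma bm_ff1[simp]: "g \<in> measurable N M \<Longrightarrow> h \<in> measurable N M \<Longrightarrow> bm N (\<lambda>w. ff x (g w) (h w))"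
  unfolding ff_def by simp
lemma bm_ff2[simp]: "h \<in> measurable N M \<Longrightarrow> bm N (\<lambda>w. ff x y (h w))"
  unfolding ff_def by simp
lemma bm_ff3[simp]: "g \<in> measurable N M \<Longrightarrow> bm N (\<lambda>w. ff x (g w) z)"
  unfolding ff_def by simp

lemma varA_eq: "varA P M = (\<integral>x. \<integral>y. \<integral>z. (gg x y z)\<^sup>2 \<partial>M \<partial>M \<partial>M)"
proof -
  have ps: "pair_sigma_finite M (M \<Otimes>\<^sub>M M)"
    by (intro pair_sigma_finite.intro sigma_finite_measure_axioms prob_space_imp_sigma_finite pm_MM)
  have fm3: "finite_measure (M \<Otimes>\<^sub>M (M \<Otimes>\<^sub>M M))"
    by (simp add: pm_MM prob_space_axioms prob_space_pair prob_space.finite_measure)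
  have T: "(\<lambda>(x, y, z). \<Sum>k<P. sgnv P x y k * sgnv P x z k) = (\<lambda>w. ff (fst w) (fst (snd w)) (snd (snd w)))"
    by (auto simp: ff_def)
  have int3: "integral\<^sup>L (M \<Otimes>\<^sub>M (M \<Otimes>\<^sub>M M)) (\<lambda>w. h (fst w) (fst (snd w)) (snd (snd w))) =
      (\<integral>x. \<integral>y. \<integral>z. h x y z \<partial>M \<partial>M \<partial>M)"
    if h: "bm (M \<Otimes>\<^sub>M (M \<Otimes>\<^sub>M M)) (\<lambda>w. h (fst w) (fst (snd w)) (snd (snd w)))" for h
  proof -
    have "integral\<^sup>L (M \<Otimes>\<^sub>M (M \<Otimes>\<^sub>M M)) (\<lambda>w. h (fst w) (fst (snd w)) (snd (snd w))) =
      (\<integral>x. integral\<^sup>L (M \<Otimes>\<^sub>M M) (\<lambda>w. h x (fst w) (snd w)) \<partial>M)"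
    proof -
      have "integrable (M \<Otimes>\<^sub>M (M \<Otimes>\<^sub>M M)) (\<lambda>w. h (fst w) (fst (snd w)) (snd (snd w)))"
        using h fm3 by (rule bm_integrable[rotated])
      from pair_sigma_finite.integral_fst'[OF ps this] show ?thesis by simp
    qed
    also have "\<dots> = (\<integral>x. \<integral>y. \<integral>z. h x y z \<partial>M \<partial>M \<partial>M)"
    proof (rule Bochner_Integration.integral_cong[OF refl])
      fix x assume x: "x \<in> space M"
      have "bm (M \<Otimes>\<^sub>M M) (\<lambda>w. h x (fst w) (snd w))"
        using bm_comp[OF h, of "\<lambda>w. (x, w)" "M \<Otimes>\<^sub>M M"] x measurable_Pair2 by simp
      from pair_int[OF this] show "integral\<^sup>L (M \<Otimes>\<^sub>M M) (\<lambda>w. h x (fst w) (snd w)) = (\<integral>y. \<integral>z. h x y z \<partial>M \<partial>M)"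
        by simp
    qed
    finally show ?thesis .
  qed
  have m: "integral\<^sup>L (M \<Otimes>\<^sub>M (M \<Otimes>\<^sub>M M)) (\<lambda>w. ff (fst w) (fst (snd w)) (snd (snd w))) = mm"
    unfolding mm_def by (rule int3) simp
  have "bm (M \<Otimes>\<^sub>M (M \<Otimes>\<^sub>M M)) (\<lambda>w. (ff (fst w) (fst (snd w)) (snd (snd w)) - mm)\<^sup>2)"
    by simp
  from int3[of "\<lambda>x y z. (ff x y z - mm)\<^sup>2", OF this]
  show ?thesis unfolding varA_def Let_def T m gg_def by simp
qed

end

context S begin

lemma pspace1[simp]: "prob (space M) = 1" using prob_space by simp

lemma bm_gg[simp]: "f \<in> measurable N M \<Longrightarrow> g \<in> measurable N M \<Longrightarrow> h \<in> measurable N M \<Longrightarrow>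
   bm N (\<lambda>w. gg (f w) (g w) (h w))"
  "g \<in> measurable N M \<Longrightarrow> h \<in> measurable N M \<Longrightarrow> bm N (\<lambda>w. gg x (g w) (h w))"
  "h \<in> measurable N M \<Longrightarrow> bm N (\<lambda>w. gg x y (h w))"
  "g \<in> measurable N M \<Longrightarrow> bm N (\<lambda>w. gg x (g w) z)"
  unfolding gg_def by simp_all

lemma bm_b[simp]: "f \<in> measurable N M \<Longrightarrow> g \<in> measurable N M \<Longrightarrow> bm N (\<lambda>w. b (f w) (g w) k)"
  "g \<in> measurable N M \<Longrightarrow> bm N (\<lambda>w. b x (g w) k)"
  unfolding b_def by simp_all

definition BB where "BB x k l = (\<integral>y. b x y k * b x y l \<partial>M)"

lemma Bsum: "(\<Sum>k<P. \<Sum>l<P. (BB x k l)\<^sup>2) = (\<integral>y. \<integral>z. (\<Sum>k<P. b x y k * b x z k)\<^sup>2 \<partial>M \<partial>M)"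
proof -
  have "(\<integral>z. (\<Sum>k<P. b x y k * b x z k)\<^sup>2 \<partial>M) = (\<integral>z. (\<Sum>k<P. \<Sum>l<P. (b x y k * b x y l) * (b x z k * b x z l)) \<partial>M)" for y
    by (rule Bochner_Integration.integral_cong[OF refl]) (simp add: power2_eq_square sum_product algebra_simps)
  also have "\<dots> y = (\<Sum>k<P. \<Sum>l<P. (b x y k * b x y l) * BB x k l)" for y
    by (simp add: BB_def)
  finally have "(\<integral>y. \<integral>z. (\<Sum>k<P. b x y k * b x z k)\<^sup>2 \<partial>M \<partial>M) = (\<integral>y. (\<Sum>k<P. \<Sum>l<P. (b x y k * b x y l) * BB x k l) \<partial>M)"
    by simp
  also have "\<dots> = (\<Sum>k<P. \<Sum>l<P. BB x k l * BB x k l)"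
    by (simp add: BB_def)
  finally show ?thesis by (simp add: power2_eq_square)
qed

lemma int_ff_z: "(\<integral>z. ff x y z \<partial>M) = (\<Sum>k<P. sgnv P x y k * A x k)"
  unfolding ff_def by simp
lemma int_ff_y: "(\<integral>y. ff x y z \<partial>M) = (\<Sum>k<P. A x k * sgnv P x z k)"
  unfolding ff_def by simp
lemma int_ff_yz: "(\<integral>y. \<integral>z. ff x y z \<partial>M \<partial>M) = (\<Sum>k<P. A x k * A x k)"
  by (simp add: int_ff_z)

lemma Bexp: "(\<Sum>k<P. b x y k * b x z k) =
   gg x y z - (\<integral>z'. gg x y z' \<partial>M) - (\<integral>y'. gg x y' z \<partial>M) + (\<integral>y'. \<integral>z'. gg x y' z' \<partial>M \<partial>M)"
proof -
  have 1: "(\<integral>z'. gg x y z' \<partial>M) = (\<Sum>k<P. sgnv P x y k * A x k) - mm"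
    unfolding gg_def by (simp add: int_ff_z prob_space)
  have 2: "(\<integral>y'. gg x y' z \<partial>M) = (\<Sum>k<P. A x k * sgnv P x z k) - mm"
    unfolding gg_def by (simp add: int_ff_y prob_space)
  have 3: "(\<integral>y'. \<integral>z'. gg x y' z' \<partial>M \<partial>M) = (\<Sum>k<P. A x k * A x k) - mm"
    unfolding gg_def by (simp add: int_ff_z prob_space)
  show ?thesis unfolding 1 2 3 gg_def ff_def b_def
    by (simp add: algebra_simps sum.distrib sum_subtractf)
qed

lemma sq4: "((p::real) - q - r + t)\<^sup>2 \<le> 4 * (p\<^sup>2 + q\<^sup>2 + r\<^sup>2 + t\<^sup>2)"
proof -
  have "0 \<le> (p + q)\<^sup>2 + (p + r)\<^sup>2 + (p - t)\<^sup>2 + (q - r)\<^sup>2 + (q + t)\<^sup>2 + (r + t)\<^sup>2" by simp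
  then show ?thesis by (simp add: power2_eq_square algebra_simps)
qed

lemma T2b: "(\<integral>x. \<integral>y. \<integral>z. (\<integral>z'. gg x y z' \<partial>M)\<^sup>2 \<partial>M \<partial>M \<partial>M) \<le> (\<integral>x. \<integral>y. \<integral>z. (gg x y z)\<^sup>2 \<partial>M \<partial>M \<partial>M)"
proof -
  have "(\<integral>x. \<integral>y. \<integral>z. (\<integral>z'. gg x y z' \<partial>M)\<^sup>2 \<partial>M \<partial>M \<partial>M) = (\<integral>x. \<integral>y. (\<integral>z'. gg x y z' \<partial>M)\<^sup>2 \<partial>M \<partial>M)"
    by simp
  also have "\<dots> \<le> (\<integral>x. \<integral>y. \<integral>z. (gg x y z)\<^sup>2 \<partial>M \<partial>M \<partial>M)"
    by (intro imono jensen) simp_all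
  finally show ?thesis .
qed

lemma T3b: "(\<integral>x. \<integral>y. \<integral>z. (\<integral>y'. gg x y' z \<partial>M)\<^sup>2 \<partial>M \<partial>M \<partial>M) \<le> (\<integral>x. \<integral>y. \<integral>z. (gg x y z)\<^sup>2 \<partial>M \<partial>M \<partial>M)"
proof -
  have "(\<integral>x. \<integral>y. \<integral>z. (\<integral>y'. gg x y' z \<partial>M)\<^sup>2 \<partial>M \<partial>M \<partial>M) = (\<integral>x. \<integral>z. \<integral>y. (\<integral>y'. gg x y' z \<partial>M)\<^sup>2 \<partial>M \<partial>M \<partial>M)"
    by (rule Bochner_Integration.integral_cong[OF refl], rule fubini) simp
  also have "\<dots> = (\<integral>x. \<integral>z. (\<integral>y'. gg x y' z \<partial>M)\<^sup>2 \<partial>M \<partial>M)"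
    by simp
  also have "\<dots> \<le> (\<integral>x. \<integral>z. \<integral>y. (gg x y z)\<^sup>2 \<partial>M \<partial>M \<partial>M)"
    by (intro imono jensen) simp_all
  also have "\<dots> = (\<integral>x. \<integral>y. \<integral>z. (gg x y z)\<^sup>2 \<partial>M \<partial>M \<partial>M)"
    by (rule Bochner_Integration.integral_cong[OF refl], rule fubini[symmetric]) simp
  finally show ?thesis .
qed

lemma T4b: "(\<integral>x. \<integral>y. \<integral>z. (\<integral>y'. \<integral>z'. gg x y' z' \<partial>M \<partial>M)\<^sup>2 \<partial>M \<partial>M \<partial>M) \<le> (\<integral>x. \<integral>y. \<integral>z. (gg x y z)\<^sup>2 \<partial>M \<partial>M \<partial>M)"
proof -
  have "(\<integral>x. \<integral>y. \<integral>z. (\<integral>y'. \<integral>z'. gg x y' z' \<partial>M \<partial>M)\<^sup>2 \<partial>M \<partial>M \<partial>M) = (\<integral>x. (\<integral>y'. \<integral>z'. gg x y' z' \<partial>M \<partial>M)\<^sup>2 \<partial>M)"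
    by simp
  also have "\<dots> \<le> (\<integral>x. \<integral>y. (\<integral>z. gg x y z \<partial>M)\<^sup>2 \<partial>M \<partial>M)"
    by (intro imono jensen) simp_all
  also have "\<dots> \<le> (\<integral>x. \<integral>y. \<integral>z. (gg x y z)\<^sup>2 \<partial>M \<partial>M \<partial>M)"
    by (intro imono jensen) simp_all
  finally show ?thesis .
qed

lemma Bbound: "(\<integral>x. (\<Sum>k<P. \<Sum>l<P. (BB x k l)\<^sup>2) \<partial>M) \<le> 16 * varA P M"
proof -
  let ?g1 = "\<lambda>x y. \<integral>z'. gg x y z' \<partial>M" and ?g2 = "\<lambda>x z. \<integral>y'. gg x y' z \<partial>M"
    and ?g0 = "\<lambda>x. \<integral>y'. \<integral>z'. gg x y' z' \<partial>M \<partial>M"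
  have "(\<integral>x. (\<Sum>k<P. \<Sum>l<P. (BB x k l)\<^sup>2) \<partial>M) =
      (\<integral>x. \<integral>y. \<integral>z. (gg x y z - ?g1 x y - ?g2 x z + ?g0 x)\<^sup>2 \<partial>M \<partial>M \<partial>M)"
    unfolding Bsum Bexp ..
  also have "\<dots> \<le> (\<integral>x. \<integral>y. \<integral>z. 4 * ((gg x y z)\<^sup>2 + (?g1 x y)\<^sup>2 + (?g2 x z)\<^sup>2 + (?g0 x)\<^sup>2) \<partial>M \<partial>M \<partial>M)"
    by (intro imono sq4) simp_all
  also have "\<dots> = 4 * ((\<integral>x. \<integral>y. \<integral>z. (gg x y z)\<^sup>2 \<partial>M \<partial>M \<partial>M) + (\<integral>x. \<integral>y. \<integral>z. (?g1 x y)\<^sup>2 \<partial>M \<partial>M \<partial>M)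
      + (\<integral>x. \<integral>y. \<integral>z. (?g2 x z)\<^sup>2 \<partial>M \<partial>M \<partial>M) + (\<integral>x. \<integral>y. \<integral>z. (?g0 x)\<^sup>2 \<partial>M \<partial>M \<partial>M))"
    by simp
  also have "\<dots> \<le> 4 * (4 * (\<integral>x. \<integral>y. \<integral>z. (gg x y z)\<^sup>2 \<partial>M \<partial>M \<partial>M))"
    using T2b T3b T4b by (smt (verit))
  finally show ?thesis unfolding varA_eq by simp
qed

end

context S begin

lemma bm_divide[simp]: "bm N f \<Longrightarrow> bm N (\<lambda>x. f x / c)"
  unfolding divide_inverse by simp

definition RR where "RR x k l = (\<integral>y. b x y k * A y l \<partial>M)"

lemma quadG: "(\<integral>y. (\<Sum>l<P. v l * A y l)\<^sup>2 \<partial>M) = (\<Sum>k<P. \<Sum>l<P. v k * v l * G k l)"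
proof -
  have "(\<integral>y. (\<Sum>l<P. v l * A y l)\<^sup>2 \<partial>M) = (\<integral>y. (\<Sum>k<P. \<Sum>l<P. v k * v l * (A y k * A y l)) \<partial>M)"
    by (rule Bochner_Integration.integral_cong[OF refl]) (simp add: power2_eq_square sum_product algebra_simps)
  also have "\<dots> = (\<Sum>k<P. \<Sum>l<P. v k * v l * G k l)" by (simp add: G_def)
  finally show ?thesis .
qed

lemma amgm: assumes "(c::real) > 0" shows "2 * u * w \<le> c * u\<^sup>2 + w\<^sup>2 / c"
proof -
  have "0 \<le> (c * u - w)\<^sup>2 / c" using assms by simp
  also have "(c * u - w)\<^sup>2 / c = c * u\<^sup>2 - 2 * u * w + w\<^sup>2 / c"
    using assms by (simp add: power2_eq_square field_simps)
  finally show ?thesis by simp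
qed

lemma abs_b: "\<bar>b x y k\<bar> \<le> 2"
  unfolding b_def using abs_sgnv[of x y k] abs_A[of x k] by linarith

lemma Rrow:
  assumes CG: "CG > 0" and hyp: "\<And>v. (\<integral>y. (\<Sum>l<P. v l * A y l)\<^sup>2 \<partial>M) \<le> CG * (\<Sum>l<P. (v l)\<^sup>2)"
  shows "(\<Sum>l<P. (RR x k l)\<^sup>2) \<le> CG * (\<integral>y. (b x y k)\<^sup>2 \<partial>M)"
proof -
  define c where "c l = RR x k l" for l
  define h where "h y = (\<Sum>l<P. c l * A y l)" for y
  have "(\<Sum>l<P. (RR x k l)\<^sup>2) = (\<Sum>l<P. c l * (\<integral>y. b x y k * A y l \<partial>M))"
    by (simp add: c_def RR_def power2_eq_square)
  also have "\<dots> = (\<integral>y. b x y k * h y \<partial>M)"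
    unfolding h_def by (simp add: sum_distrib_left algebra_simps)
  finally have eq: "(\<Sum>l<P. (RR x k l)\<^sup>2) = (\<integral>y. b x y k * h y \<partial>M)" .
  have "2 * (\<integral>y. b x y k * h y \<partial>M) = (\<integral>y. 2 * b x y k * h y \<partial>M)" by (simp add: mult.assoc)
  also have "\<dots> \<le> (\<integral>y. CG * (b x y k)\<^sup>2 + (h y)\<^sup>2 / CG \<partial>M)"
    by (intro imono amgm CG) (simp_all add: h_def)
  also have "\<dots> = CG * (\<integral>y. (b x y k)\<^sup>2 \<partial>M) + (\<integral>y. (h y)\<^sup>2 \<partial>M) / CG"
    by (simp add: h_def)
  also have "(\<integral>y. (h y)\<^sup>2 \<partial>M) / CG \<le> CG * (\<Sum>l<P. (c l)\<^sup>2) / CG"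
    unfolding h_def by (rule divide_right_mono[OF hyp[of c]]) (use CG in simp)
  also have "CG * (\<Sum>l<P. (c l)\<^sup>2) / CG = (\<Sum>l<P. (RR x k l)\<^sup>2)"
    using CG by (simp add: c_def)
  finally show ?thesis unfolding eq by simp
qed

lemma Rbound:
  assumes CG: "CG > 0" and hyp: "\<And>v. (\<integral>y. (\<Sum>l<P. v l * A y l)\<^sup>2 \<partial>M) \<le> CG * (\<Sum>l<P. (v l)\<^sup>2)"
  shows "(\<Sum>k<P. \<Sum>l<P. (RR x k l)\<^sup>2) \<le> 4 * CG * P"
proof -
  have "(\<Sum>k<P. \<Sum>l<P. (RR x k l)\<^sup>2) \<le> (\<Sum>k<P. CG * 4)"
  proof (rule sum_mono)
    fix k
    have "(\<integral>y. (b x y k)\<^sup>2 \<partial>M) \<le> 4"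
    proof (rule integral_le_const)
      show "AE y in M. (b x y k)\<^sup>2 \<le> 4"
        using abs_b[of x _ k] by (auto intro!: AE_I2 simp: abs_le_square_iff[of _ 2, simplified])
    qed simp
    then show "(\<Sum>l<P. (RR x k l)\<^sup>2) \<le> CG * 4"
    proof -
      assume h4: "(\<integral>y. (b x y k)\<^sup>2 \<partial>M) \<le> 4"
      have "CG * (\<integral>y. (b x y k)\<^sup>2 \<partial>M) \<le> CG * 4" using h4 CG by (simp add: mult_left_mono)
      then show ?thesis using Rrow[OF CG hyp, of x k] by linarith
    qed
  qed
  then show ?thesis by (simp add: ac_simps)
qed

lemma Gbound:
  assumes CG: "CG > 0" and hyp: "\<And>v. (\<integral>y. (\<Sum>l<P. v l * A y l)\<^sup>2 \<partial>M) \<le> CG * (\<Sum>l<P. (v l)\<^sup>2)"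
  shows "(\<Sum>k<P. \<Sum>l<P. (G k l)\<^sup>2) \<le> CG * P"
proof -
  have "(\<Sum>k<P. \<Sum>l<P. (G k l)\<^sup>2) = (\<Sum>k<P. \<Sum>l<P. G k l * (\<integral>x. A x k * A x l \<partial>M))"
    by (simp add: power2_eq_square G_def)
  also have "\<dots> = (\<Sum>k<P. \<Sum>l<P. (\<integral>x. A x k * A x l \<partial>M) * G k l)"
    by (simp add: mult.commute)
  also have "\<dots> = (\<integral>x. (\<Sum>k<P. \<Sum>l<P. A x k * A x l * G k l) \<partial>M)"
    by simp
  also have "\<dots> = (\<integral>x. (\<integral>y. (\<Sum>l<P. A x l * A y l)\<^sup>2 \<partial>M) \<partial>M)"
    by (simp add: quadG)
  also have "\<dots> \<le> (\<integral>x. CG * P \<partial>M)"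
  proof (rule imono)
    fix x
    have "(\<Sum>l<P. (A x l)\<^sup>2) \<le> (\<Sum>l<P. 1)"
      by (intro sum_mono) (simp add: abs_square_le_1 abs_A)
    then have "(\<Sum>l<P. (A x l)\<^sup>2) \<le> P" by simp
    then have "CG * (\<Sum>l<P. (A x l)\<^sup>2) \<le> CG * P" using CG by (simp add: mult_left_mono)
    then show "(\<integral>y. (\<Sum>l<P. A x l * A y l)\<^sup>2 \<partial>M) \<le> CG * P"
      using hyp[of "\<lambda>l. A x l"] by linarith
  qed simp_all
  finally show ?thesis by (simp add: int_const)
qed

end

context S begin

definition K where "K x k l = (\<integral>y. e x y k * e x y l \<partial>M)"

lemma bm_e[simp]: "f \<in> measurable N M \<Longrightarrow> g \<in> measurable N M \<Longrightarrow> bm N (\<lambda>w. e (f w) (g w) k)"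
  "g \<in> measurable N M \<Longrightarrow> bm N (\<lambda>w. e x (g w) k)"
  unfolding e_def by simp_all

lemma bm_K[simp]: "f \<in> measurable N M \<Longrightarrow> bm N (\<lambda>w. K (f w) k l)"
proof -
  assume f: "f \<in> measurable N M"
  have "bm M (\<lambda>x. K x k l)" unfolding K_def by simp
  from bm_comp[OF this f] show ?thesis .
qed
lemma bm_BB[simp]: "f \<in> measurable N M \<Longrightarrow> bm N (\<lambda>w. BB (f w) k l)"
proof -
  assume f: "f \<in> measurable N M"
  have "bm M (\<lambda>x. BB x k l)" unfolding BB_def by simp
  from bm_comp[OF this f] show ?thesis .
qed
lemma bm_RR[simp]: "f \<in> measurable N M \<Longrightarrow> bm N (\<lambda>w. RR (f w) k l)"
proof -
  assume f: "f \<in> measurable N M"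
  have "bm M (\<lambda>x. RR x k l)" unfolding RR_def by simp
  from bm_comp[OF this f] show ?thesis .
qed

lemma Kdecomp: "K x k l = BB x k l + RR x k l + RR x l k + G k l"
proof -
  have "K x k l = (\<integral>y. b x y k * b x y l + b x y k * A y l + b x y l * A y k + A y k * A y l \<partial>M)"
    unfolding K_def by (rule Bochner_Integration.integral_cong[OF refl]) (simp add: e_def b_def algebra_simps)
  also have "\<dots> = BB x k l + RR x k l + RR x l k + G k l"
    by (simp add: BB_def RR_def G_def)
  finally show ?thesis .
qed

lemma intK: "(\<integral>x. K x k l \<partial>M) = Sg1 k l - 2 * G k l"
  unfolding K_def by (rule F1)

lemma KS: "(\<integral>x. (K x k l - (Sg1 k l - 2 * G k l))\<^sup>2 \<partial>M) \<le> (\<integral>x. (K x k l)\<^sup>2 \<partial>M)"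
proof -
  let ?S = "Sg1 k l - 2 * G k l"
  have "(\<integral>x. (K x k l - ?S)\<^sup>2 \<partial>M) = (\<integral>x. (K x k l)\<^sup>2 - 2 * ?S * K x k l + ?S\<^sup>2 \<partial>M)"
    by (rule Bochner_Integration.integral_cong[OF refl]) (simp add: power2_eq_square algebra_simps)
  also have "\<dots> = (\<integral>x. (K x k l)\<^sup>2 \<partial>M) - ?S\<^sup>2"
    by (simp add: intK power2_eq_square int_const)
  finally show ?thesis by simp
qed

lemma sq4p: "((p::real) + q + r + t)\<^sup>2 \<le> 4 * (p\<^sup>2 + q\<^sup>2 + r\<^sup>2 + t\<^sup>2)"
  using sq4[of p "-q" "-r" t] by simp

lemma Tbound:
  assumes CG: "CG > 0" and hyp: "\<And>v. (\<integral>y. (\<Sum>l<P. v l * A y l)\<^sup>2 \<partial>M) \<le> CG * (\<Sum>l<P. (v l)\<^sup>2)"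
  shows "(\<integral>x. (\<Sum>k<P. \<Sum>l<P. (K x k l - (Sg1 k l - 2 * G k l))\<^sup>2) \<partial>M) \<le> 64 * varA P M + 36 * CG * P"
proof -
  have "(\<integral>x. (\<Sum>k<P. \<Sum>l<P. (K x k l - (Sg1 k l - 2 * G k l))\<^sup>2) \<partial>M)
     = (\<Sum>k<P. \<Sum>l<P. (\<integral>x. (K x k l - (Sg1 k l - 2 * G k l))\<^sup>2 \<partial>M))"
    by simp
  also have "\<dots> \<le> (\<Sum>k<P. \<Sum>l<P. (\<integral>x. (K x k l)\<^sup>2 \<partial>M))"
    by (intro sum_mono KS)
  also have "\<dots> = (\<integral>x. (\<Sum>k<P. \<Sum>l<P. (K x k l)\<^sup>2) \<partial>M)"
    by simp
  also have "\<dots> \<le> (\<integral>x. (\<Sum>k<P. \<Sum>l<P. 4 * ((BB x k l)\<^sup>2 + (RR x k l)\<^sup>2 + (RR x l k)\<^sup>2 + (G k l)\<^sup>2)) \<partial>M)"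
  proof -
    have pw: "(K x k l)\<^sup>2 \<le> 4 * ((BB x k l)\<^sup>2 + (RR x k l)\<^sup>2 + (RR x l k)\<^sup>2 + (G k l)\<^sup>2)" for x k l
      unfolding Kdecomp by (rule sq4p)
    show ?thesis by (intro imono sum_mono pw) simp_all
  qed
  also have "\<dots> = 4 * ((\<integral>x. (\<Sum>k<P. \<Sum>l<P. (BB x k l)\<^sup>2) \<partial>M) + 2 * (\<integral>x. (\<Sum>k<P. \<Sum>l<P. (RR x k l)\<^sup>2) \<partial>M)
      + (\<Sum>k<P. \<Sum>l<P. (G k l)\<^sup>2))"
  proof -
    have sw: "(\<Sum>k<P. \<Sum>l<P. (RR x l k)\<^sup>2) = (\<Sum>k<P. \<Sum>l<P. (RR x k l)\<^sup>2)" for x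
      by (rule sum.swap)
    have "(\<integral>x. (\<Sum>k<P. \<Sum>l<P. 4 * ((BB x k l)\<^sup>2 + (RR x k l)\<^sup>2 + (RR x l k)\<^sup>2 + (G k l)\<^sup>2)) \<partial>M)
       = (\<integral>x. 4 * ((\<Sum>k<P. \<Sum>l<P. (BB x k l)\<^sup>2) + 2 * (\<Sum>k<P. \<Sum>l<P. (RR x k l)\<^sup>2) + (\<Sum>k<P. \<Sum>l<P. (G k l)\<^sup>2)) \<partial>M)"
    proof (rule Bochner_Integration.integral_cong[OF refl])
      fix x
      have "(\<Sum>k<P. \<Sum>l<P. 4 * ((BB x k l)\<^sup>2 + (RR x k l)\<^sup>2 + (RR x l k)\<^sup>2 + (G k l)\<^sup>2)) =
        4 * ((\<Sum>k<P. \<Sum>l<P. (BB x k l)\<^sup>2) + (\<Sum>k<P. \<Sum>l<P. (RR x k l)\<^sup>2) + (\<Sum>k<P. \<Sum>l<P. (RR x l k)\<^sup>2) + (\<Sum>k<P. \<Sum>l<P. (G k l)\<^sup>2))"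
        by (simp add: sum.distrib sum_distrib_left)
      then show "(\<Sum>k<P. \<Sum>l<P. 4 * ((BB x k l)\<^sup>2 + (RR x k l)\<^sup>2 + (RR x l k)\<^sup>2 + (G k l)\<^sup>2)) =
        4 * ((\<Sum>k<P. \<Sum>l<P. (BB x k l)\<^sup>2) + 2 * (\<Sum>k<P. \<Sum>l<P. (RR x k l)\<^sup>2) + (\<Sum>k<P. \<Sum>l<P. (G k l)\<^sup>2))"
        unfolding sw by simp
    qed
    also have "\<dots> = 4 * ((\<integral>x. (\<Sum>k<P. \<Sum>l<P. (BB x k l)\<^sup>2) \<partial>M) + 2 * (\<integral>x. (\<Sum>k<P. \<Sum>l<P. (RR x k l)\<^sup>2) \<partial>M)
      + (\<Sum>k<P. \<Sum>l<P. (G k l)\<^sup>2))"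
      by (simp add: int_const)
    finally show ?thesis .
  qed
  also have "\<dots> \<le> 4 * (16 * varA P M + 2 * (\<integral>x. 4 * CG * P \<partial>M) + CG * P)"
  proof -
    have r: "(\<integral>x. (\<Sum>k<P. \<Sum>l<P. (RR x k l)\<^sup>2) \<partial>M) \<le> (\<integral>x. 4 * CG * P \<partial>M)"
      by (intro imono Rbound[OF CG hyp]) simp_all
    show ?thesis by (intro mult_left_mono add_mono) (use Bbound Gbound[OF CG hyp] r in auto)
  qed
  finally show ?thesis by (simp add: int_const)
qed

end

context S begin

lemma abs_int_le: assumes "bm M f" "\<And>x. \<bar>f x\<bar> \<le> B" shows "\<bar>\<integral>x. f x \<partial>M\<bar> \<le> B"
proof -
  have l1: "f x \<le> B" and l2: "- B \<le> f x" for x using assms(2)[of x] by linarith+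
  have "(\<integral>x. f x \<partial>M) \<le> (\<integral>x. B \<partial>M)" using assms(1) l1 by (intro imono) auto
  moreover have "(\<integral>x. - B \<partial>M) \<le> (\<integral>x. f x \<partial>M)" using assms(1) l2 by (intro imono) auto
  ultimately show ?thesis by (simp add: int_const)
qed

lemma Sg1_abs: "\<bar>Sg1 k l\<bar> \<le> 1"
  unfolding Sg1_def
proof (rule abs_int_le)
  fix x show "\<bar>\<integral>y. sgnv P x y k * sgnv P x y l \<partial>M\<bar> \<le> 1"
    by (rule abs_int_le) (simp_all add: abs_mult mult_le_one abs_sgnv)
qed simp

definition W where "W = {sqrt (\<Sum>k<P. (\<Sum>l<P. Sg1 k l * v l)\<^sup>2) | v. (\<Sum>l<P. (v l)\<^sup>2) = 1}"

lemma spec_W: "spec_norm P (Sigma1 P M) = Sup W"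
proof -
  have "Sigma1 P M = Sg1" by (intro ext Sigma1_eq)
  then show ?thesis unfolding spec_norm_def W_def by simp
qed

lemma bdd_W: "bdd_above W"
proof (rule bdd_aboveI)
  fix w assume "w \<in> W"
  then obtain v where v: "(\<Sum>l<P. (v l)\<^sup>2) = 1" and w: "w = sqrt (\<Sum>k<P. (\<Sum>l<P. Sg1 k l * v l)\<^sup>2)"
    unfolding W_def by auto
  have vl: "\<bar>v l\<bar> \<le> 1" if "l < P" for l
  proof -
    have "(v l)\<^sup>2 \<le> (\<Sum>l<P. (v l)\<^sup>2)"
      using that by (intro member_le_sum) auto
    then show ?thesis using v by (simp add: abs_square_le_1)
  qed
  have "\<bar>\<Sum>l<P. Sg1 k l * v l\<bar> \<le> P" for k
  proof -
    have "\<bar>\<Sum>l<P. Sg1 k l * v l\<bar> \<le> (\<Sum>l<P. \<bar>Sg1 k l * v l\<bar>)" by (rule sum_abs)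
    also have "\<dots> \<le> (\<Sum>l<P. 1)"
      by (intro sum_mono) (simp add: abs_mult mult_le_one Sg1_abs vl)
    finally show ?thesis by simp
  qed
  then have "(\<Sum>l<P. Sg1 k l * v l)\<^sup>2 \<le> (real P)\<^sup>2" for k
    by (metis abs_le_square_iff abs_of_nat)
  then have "(\<Sum>k<P. (\<Sum>l<P. Sg1 k l * v l)\<^sup>2) \<le> (\<Sum>k<P. (real P)\<^sup>2)"
    by (intro sum_mono)
  then show "w \<le> sqrt (real P * (real P)\<^sup>2)" unfolding w by simp
qed

lemma specv: assumes P: "P > 0"
  shows "sqrt (\<Sum>k<P. (\<Sum>l<P. Sg1 k l * v l)\<^sup>2) \<le> Sup W * sqrt (\<Sum>l<P. (v l)\<^sup>2)"
proof -
  define e1 where "e1 l = (if l = 0 then 1 else (0::real))" for l :: nat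
  have "(\<Sum>l<P. (e1 l)\<^sup>2) = (\<Sum>l<P. if l = 0 then 1 else 0)"
    by (intro sum.cong) (auto simp: e1_def)
  also have "\<dots> = 1" using P by simp
  finally have "(\<Sum>l<P. (e1 l)\<^sup>2) = 1" .
  then have "sqrt (\<Sum>k<P. (\<Sum>l<P. Sg1 k l * e1 l)\<^sup>2) \<in> W" unfolding W_def by blast
  then have s0: "0 \<le> Sup W" by (meson bdd_W cSup_upper order_trans real_sqrt_ge_zero sum_nonneg zero_le_power2)
  define t where "t = sqrt (\<Sum>l<P. (v l)\<^sup>2)"
  show ?thesis
  proof (cases "t = 0")
    case True
    then have "(\<Sum>l<P. (v l)\<^sup>2) = 0" unfolding t_def by simp
    then have "\<forall>l\<in>{..<P}. (v l)\<^sup>2 = 0" by (subst (asm) sum_nonneg_eq_0_iff) auto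
    then have "v l = 0" if "l < P" for l using that by simp
    then show ?thesis using s0 by (simp add: t_def[symmetric] True)
  next
    case False
    have "0 \<le> (\<Sum>l<P. (v l)\<^sup>2)" by (simp add: sum_nonneg)
    then have t: "t > 0" using False unfolding t_def by simp
    define w where "w l = v l / t" for l
    have "(\<Sum>l<P. (w l)\<^sup>2) = (\<Sum>l<P. (v l)\<^sup>2) / t\<^sup>2"
      unfolding w_def by (simp add: power_divide sum_divide_distrib)
    also have "\<dots> = 1" using t unfolding t_def by (simp add: sum_nonneg)
    finally have "sqrt (\<Sum>k<P. (\<Sum>l<P. Sg1 k l * w l)\<^sup>2) \<in> W" unfolding W_def by blast
    then have le: "sqrt (\<Sum>k<P. (\<Sum>l<P. Sg1 k l * w l)\<^sup>2) \<le> Sup W" by (rule cSup_upper[OF _ bdd_W])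
    have "sqrt (\<Sum>k<P. (\<Sum>l<P. Sg1 k l * w l)\<^sup>2) = sqrt (\<Sum>k<P. (\<Sum>l<P. Sg1 k l * v l)\<^sup>2) / t"
    proof -
      have "(\<Sum>k<P. (\<Sum>l<P. Sg1 k l * w l)\<^sup>2) = (\<Sum>k<P. (\<Sum>l<P. Sg1 k l * v l)\<^sup>2) / t\<^sup>2"
        unfolding w_def by (simp add: sum_divide_distrib[symmetric] power_divide)
      then show ?thesis using t by (simp add: real_sqrt_divide)
    qed
    with le t have "sqrt (\<Sum>k<P. (\<Sum>l<P. Sg1 k l * v l)\<^sup>2) \<le> Sup W * t"
      by (simp add: divide_le_eq)
    then show ?thesis unfolding t_def .
  qed
qed

lemma quadSg1: assumes P: "P > 0"
  shows "(\<Sum>k<P. \<Sum>l<P. v k * v l * Sg1 k l) \<le> Sup W * (\<Sum>l<P. (v l)\<^sup>2)"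
proof -
  define u where "u k = (\<Sum>l<P. Sg1 k l * v l)" for k
  have eq: "(\<Sum>k<P. \<Sum>l<P. v k * v l * Sg1 k l) = (\<Sum>k<P. v k * u k)"
    unfolding u_def by (simp add: sum_distrib_left algebra_simps)
  have "(\<Sum>k<P. v k * u k) \<le> sqrt ((\<Sum>k<P. v k * u k)\<^sup>2)" by simp
  also have "\<dots> \<le> sqrt ((\<Sum>k<P. (v k)\<^sup>2) * (\<Sum>k<P. (u k)\<^sup>2))"
    by (intro real_sqrt_le_mono Cauchy_Schwarz_ineq_sum)
  also have "\<dots> = sqrt (\<Sum>k<P. (v k)\<^sup>2) * sqrt (\<Sum>k<P. (u k)\<^sup>2)" by (simp add: real_sqrt_mult)
  also have "\<dots> \<le> sqrt (\<Sum>k<P. (v k)\<^sup>2) * (Sup W * sqrt (\<Sum>l<P. (v l)\<^sup>2))"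
    by (intro mult_left_mono specv[OF P, of v, folded u_def]) (simp add: sum_nonneg)
  also have "\<dots> = Sup W * (\<Sum>l<P. (v l)\<^sup>2)"
    by (simp add: sum_nonneg)
  finally show ?thesis unfolding eq .
qed

lemma hypSg: "(\<integral>y. (\<Sum>l<P. v l * A y l)\<^sup>2 \<partial>M) \<le> (\<Sum>k<P. \<Sum>l<P. v k * v l * Sg1 k l)"
proof -
  have "(\<integral>y. (\<Sum>l<P. v l * A y l)\<^sup>2 \<partial>M) = (\<integral>y. (\<integral>z. (\<Sum>l<P. v l * sgnv P y z l) \<partial>M)\<^sup>2 \<partial>M)"
    by simp
  also have "\<dots> \<le> (\<integral>y. \<integral>z. (\<Sum>l<P. v l * sgnv P y z l)\<^sup>2 \<partial>M \<partial>M)"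
    by (intro imono jensen) simp_all
  also have "\<dots> = (\<integral>y. \<integral>z. (\<Sum>k<P. \<Sum>l<P. v k * v l * (sgnv P y z k * sgnv P y z l)) \<partial>M \<partial>M)"
    by (simp add: power2_eq_square sum_product algebra_simps)
  also have "\<dots> = (\<Sum>k<P. \<Sum>l<P. v k * v l * Sg1 k l)"
    by (simp add: Sg1_def)
  finally show ?thesis .
qed

lemma Tfinal:
  assumes P: "P > 0" and C: "spec_norm P (Sigma1 P M) \<le> C"
  shows "(\<integral>x. (\<Sum>k<P. \<Sum>l<P. (K x k l - (Sg1 k l - 2 * G k l))\<^sup>2) \<partial>M) \<le> 64 * varA P M + 36 * max C 1 * P"
proof (rule Tbound)
  show "0 < max C 1" by simp
  fix v :: "nat \<Rightarrow> real"
  have "Sup W * (\<Sum>l<P. (v l)\<^sup>2) \<le> max C 1 * (\<Sum>l<P. (v l)\<^sup>2)"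
    using C unfolding spec_W by (intro mult_right_mono) (auto simp: sum_nonneg)
  then show "(\<integral>y. (\<Sum>l<P. v l * A y l)\<^sup>2 \<partial>M) \<le> max C 1 * (\<Sum>l<P. (v l)\<^sup>2)"
    using hypSg[of v] quadSg1[OF P, of v] by linarith
qed

end

lemma bm_integral_gen:
  assumes "prob_space M" "bm (N \<Otimes>\<^sub>M M) (\<lambda>z. f (fst z) (snd z))"
  shows "bm N (\<lambda>x. \<integral>y. f x y \<partial>M)"
proof -
  interpret prob_space M by fact
  have "case_prod f \<in> borel_measurable (N \<Otimes>\<^sub>M M)" "bdd (case_prod f)"
    using assms(2) unfolding bm_def by (auto simp: split_beta')
  then show ?thesis unfolding bm_def using prob_space_axioms by (auto intro!: bdd_integral)
qed

lemma restrict_int: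
  fixes M :: "'a measure" and n :: nat and F :: "(nat \<Rightarrow> 'a) \<Rightarrow> real"
  assumes M: "prob_space M" and J: "J \<subseteq> {..<n}"
    and F: "F \<in> borel_measurable (PiM J (\<lambda>_. M))"
    and Fr: "\<And>X. F (restrict X J) = F X"
  shows "(\<integral>X. F X \<partial>PiM {..<n} (\<lambda>_. M)) = (\<integral>Y. F Y \<partial>PiM J (\<lambda>_. M))"
proof -
  have pp: "product_prob_space (\<lambda>_. M)" by (rule product_prob_spaceI) (rule M)
  interpret PP: product_prob_space "\<lambda>_. M" "{..<n}" by (rule pp)
  have fin: "finite J" using J by (rule finite_subset) simp
  have "(\<integral>Y. F Y \<partial>PiM J (\<lambda>_. M)) = (\<integral>Y. F Y \<partial>distr (PiM {..<n} (\<lambda>_. M)) (PiM J (\<lambda>_. M)) (\<lambda>x. restrict x J))"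
    by (simp only: PP.distr_PiM_restrict_finite[OF fin J])
  also have "\<dots> = (\<integral>X. F (restrict X J) \<partial>PiM {..<n} (\<lambda>_. M))"
    by (rule integral_distr[of "\<lambda>x. restrict x J" "PiM {..<n} (\<lambda>_. M)" "PiM J (\<lambda>_. M)" F])
      (simp_all add: measurable_restrict_subset[OF J] F)
  finally show ?thesis by (simp only: Fr)
qed

lemma meas_comp_fst: "i \<in> J \<Longrightarrow> (\<lambda>w. fst w i) \<in> measurable (PiM J (\<lambda>_. M) \<Otimes>\<^sub>M N) M"
  by (rule measurable_compose[OF measurable_fst measurable_component_singleton]) auto

lemma bm3_comp:
  assumes H: "bm (M \<Otimes>\<^sub>M (M \<Otimes>\<^sub>M M)) (\<lambda>w. H (fst w) (fst (snd w)) (snd (snd w)))"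
    and f: "f1 \<in> measurable N M" "f2 \<in> measurable N M" "f3 \<in> measurable N M"
  shows "bm N (\<lambda>\<omega>. H (f1 \<omega>) (f2 \<omega>) (f3 \<omega>))"
proof -
  have "(\<lambda>\<omega>. (f1 \<omega>, f2 \<omega>, f3 \<omega>)) \<in> measurable N (M \<Otimes>\<^sub>M (M \<Otimes>\<^sub>M M))"
    using f by (intro measurable_Pair)
  from bm_comp[OF H this] show ?thesis by simp
qed

lemma marg3:
  fixes M :: "'a measure" and H :: "'a \<Rightarrow> 'a \<Rightarrow> 'a \<Rightarrow> real" and n :: nat
  assumes M: "prob_space M" and st: "s < n" "t < n" "u < n" "s \<noteq> t" "s \<noteq> u" "t \<noteq> u"
    and hyp0: "bm (M \<Otimes>\<^sub>M (M \<Otimes>\<^sub>M M)) (\<lambda>w. H (fst w) (fst (snd w)) (snd (snd w)))"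
  shows "(\<integral>X. H (X s) (X t) (X u) \<partial>PiM {..<n} (\<lambda>_. M)) = (\<integral>x. \<integral>y. \<integral>z. H x y z \<partial>M \<partial>M \<partial>M)"
proof -
  have pp: "product_prob_space (\<lambda>_. M)" by (rule product_prob_spaceI) (rule M)
  interpret PP: product_prob_space "\<lambda>_. M" "{..<n}" by (rule pp)
  interpret MM: prob_space M by (rule M)
  define J where "J = insert u (insert t {s})"
  have J: "J \<subseteq> {..<n}" using st unfolding J_def by auto
  have fmJ: "finite_measure (PiM K (\<lambda>_. M))" if "finite K" for K
    using prob_space_PiM[of K "\<lambda>_. M"] M prob_space.finite_measure by blast
  have bmJ: "bm (PiM J (\<lambda>_. M)) (\<lambda>Y. H (Y s) (Y t) (Y u))"
    by (rule bm3_comp[OF hyp0]) (auto simp: J_def intro!: measurable_component_singleton)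
  have "(\<integral>X. H (X s) (X t) (X u) \<partial>PiM {..<n} (\<lambda>_. M)) = (\<integral>Y. H (Y s) (Y t) (Y u) \<partial>PiM J (\<lambda>_. M))"
    by (rule restrict_int[OF M J]) (use bmJ in \<open>auto simp: bm_def J_def\<close>)
  also have "\<dots> = (\<integral>x. \<integral>z. H (x s) (x t) z \<partial>M \<partial>PiM (insert t {s}) (\<lambda>_. M))"
  proof -
    have "(\<integral>Y. H (Y s) (Y t) (Y u) \<partial>PiM J (\<lambda>_. M)) =
        (\<integral>x. \<integral>z. H ((x(u := z)) s) ((x(u := z)) t) ((x(u := z)) u) \<partial>M \<partial>PiM (insert t {s}) (\<lambda>_. M))"
    proof -
      have "integrable (PiM J (\<lambda>_. M)) (\<lambda>Y. H (Y s) (Y t) (Y u))"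
        by (rule bm_integrable[OF fmJ bmJ]) (simp add: J_def)
      then show ?thesis using st unfolding J_def by (intro PP.product_integral_insert) auto
    qed
    then show ?thesis using st by simp
  qed
  also have "\<dots> = (\<integral>x. \<integral>y. \<integral>z. H (x s) y z \<partial>M \<partial>M \<partial>PiM {s} (\<lambda>_. M))"
  proof -
    have bmG: "bm (PiM (insert t {s}) (\<lambda>_. M)) (\<lambda>x. \<integral>z. H (x s) (x t) z \<partial>M)"
      by (rule bm_integral_gen[OF M], rule bm3_comp[OF hyp0]) (auto intro!: meas_comp_fst measurable_snd)
    have "(\<integral>x. \<integral>z. H (x s) (x t) z \<partial>M \<partial>PiM (insert t {s}) (\<lambda>_. M)) =
        (\<integral>x. \<integral>y. \<integral>z. H ((x(t := y)) s) ((x(t := y)) t) z \<partial>M \<partial>M \<partial>PiM {s} (\<lambda>_. M))"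
    proof -
      have "integrable (PiM (insert t {s}) (\<lambda>_. M)) (\<lambda>x. \<integral>z. H (x s) (x t) z \<partial>M)"
        by (rule bm_integrable[OF fmJ bmG]) simp
      then show ?thesis using st by (intro PP.product_integral_insert) auto
    qed
    then show ?thesis using st by simp
  qed
  also have "\<dots> = (\<integral>x. \<integral>y. \<integral>z. H x y z \<partial>M \<partial>M \<partial>M)"
  proof (rule PP.product_integral_singleton)
    have "bm M (\<lambda>x. \<integral>y. \<integral>z. H x y z \<partial>M \<partial>M)"
      by (rule bm_integral_gen[OF M], rule bm_integral_gen[OF M], rule bm3_comp[OF hyp0]) auto
    then show "(\<lambda>x. \<integral>y. \<integral>z. H x y z \<partial>M \<partial>M) \<in> borel_measurable M" unfolding bm_def by simp
  qed
  finally show ?thesis .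
qed

lemma bm4_comp:
  assumes H: "bm (M \<Otimes>\<^sub>M (M \<Otimes>\<^sub>M (M \<Otimes>\<^sub>M M))) (\<lambda>v. H (fst v) (fst (snd v)) (fst (snd (snd v))) (snd (snd (snd v))))"
    and f: "f1 \<in> measurable N M" "f2 \<in> measurable N M" "f3 \<in> measurable N M" "f4 \<in> measurable N M"
  shows "bm N (\<lambda>\<omega>. H (f1 \<omega>) (f2 \<omega>) (f3 \<omega>) (f4 \<omega>))"
proof -
  have "(\<lambda>\<omega>. (f1 \<omega>, f2 \<omega>, f3 \<omega>, f4 \<omega>)) \<in> measurable N (M \<Otimes>\<^sub>M (M \<Otimes>\<^sub>M (M \<Otimes>\<^sub>M M)))"
    using f by (intro measurable_Pair)
  from bm_comp[OF H this] show ?thesis by simp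
qed

lemma marg4:
  fixes M :: "'a measure" and H :: "'a \<Rightarrow> 'a \<Rightarrow> 'a \<Rightarrow> 'a \<Rightarrow> real" and n :: nat
  assumes M: "prob_space M" and st: "a < n" "b < n" "c < n" "d < n" "a \<noteq> b" "a \<noteq> c" "a \<noteq> d" "b \<noteq> c" "b \<noteq> d" "c \<noteq> d"
    and hyp0: "bm (M \<Otimes>\<^sub>M (M \<Otimes>\<^sub>M (M \<Otimes>\<^sub>M M))) (\<lambda>v. H (fst v) (fst (snd v)) (fst (snd (snd v))) (snd (snd (snd v))))"
  shows "(\<integral>X. H (X a) (X b) (X c) (X d) \<partial>PiM {..<n} (\<lambda>_. M)) = (\<integral>x. \<integral>y. \<integral>z. \<integral>w. H x y z w \<partial>M \<partial>M \<partial>M \<partial>M)"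
proof -
  have pp: "product_prob_space (\<lambda>_. M)" by (rule product_prob_spaceI) (rule M)
  interpret PP: product_prob_space "\<lambda>_. M" "{..<n}" by (rule pp)
  interpret MM: prob_space M by (rule M)
  define J where "J = insert d (insert c (insert b {a}))"
  have J: "J \<subseteq> {..<n}" using st unfolding J_def by auto
  have fmJ: "finite_measure (PiM K (\<lambda>_. M))" if "finite K" for K
    using prob_space_PiM[of K "\<lambda>_. M"] M prob_space.finite_measure by blast
  have bmJ: "bm (PiM J (\<lambda>_. M)) (\<lambda>Y. H (Y a) (Y b) (Y c) (Y d))"
    by (rule bm4_comp[OF hyp0]) (auto simp: J_def intro!: measurable_component_singleton)
  have "(\<integral>X. H (X a) (X b) (X c) (X d) \<partial>PiM {..<n} (\<lambda>_. M)) = (\<integral>Y. H (Y a) (Y b) (Y c) (Y d) \<partial>PiM J (\<lambda>_. M))"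
    by (rule restrict_int[OF M J]) (use bmJ in \<open>auto simp: bm_def J_def\<close>)
  also have "\<dots> = (\<integral>x. \<integral>w. H (x a) (x b) (x c) w \<partial>M \<partial>PiM (insert c (insert b {a})) (\<lambda>_. M))"
  proof -
    have "(\<integral>Y. H (Y a) (Y b) (Y c) (Y d) \<partial>PiM J (\<lambda>_. M)) =
        (\<integral>x. \<integral>w. H ((x(d := w)) a) ((x(d := w)) b) ((x(d := w)) c) ((x(d := w)) d) \<partial>M \<partial>PiM (insert c (insert b {a})) (\<lambda>_. M))"
    proof -
      have "integrable (PiM J (\<lambda>_. M)) (\<lambda>Y. H (Y a) (Y b) (Y c) (Y d))"
        by (rule bm_integrable[OF fmJ bmJ]) (simp add: J_def)
      then show ?thesis using st unfolding J_def by (intro PP.product_integral_insert) auto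
    qed
    then show ?thesis using st by simp
  qed
  also have "\<dots> = (\<integral>x. \<integral>z. \<integral>w. H (x a) (x b) z w \<partial>M \<partial>M \<partial>PiM (insert b {a}) (\<lambda>_. M))"
  proof -
    have bmG: "bm (PiM (insert c (insert b {a})) (\<lambda>_. M)) (\<lambda>x. \<integral>w. H (x a) (x b) (x c) w \<partial>M)"
      by (rule bm_integral_gen[OF M], rule bm4_comp[OF hyp0]) (auto intro!: meas_comp_fst measurable_snd)
    have "(\<integral>x. \<integral>w. H (x a) (x b) (x c) w \<partial>M \<partial>PiM (insert c (insert b {a})) (\<lambda>_. M)) =
        (\<integral>x. \<integral>z. \<integral>w. H ((x(c := z)) a) ((x(c := z)) b) ((x(c := z)) c) w \<partial>M \<partial>M \<partial>PiM (insert b {a}) (\<lambda>_. M))"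
    proof -
      have "integrable (PiM (insert c (insert b {a})) (\<lambda>_. M)) (\<lambda>x. \<integral>w. H (x a) (x b) (x c) w \<partial>M)"
        by (rule bm_integrable[OF fmJ bmG]) simp
      then show ?thesis using st by (intro PP.product_integral_insert) auto
    qed
    then show ?thesis using st by simp
  qed
  also have "\<dots> = (\<integral>x. \<integral>y. \<integral>z. \<integral>w. H (x a) y z w \<partial>M \<partial>M \<partial>M \<partial>PiM {a} (\<lambda>_. M))"
  proof -
    have m1: "(\<lambda>q. fst (fst q) i) \<in> measurable ((PiM (insert b {a}) (\<lambda>_. M) \<Otimes>\<^sub>M M) \<Otimes>\<^sub>M M) M"
      if "i \<in> insert b {a}" for i
      using that by (intro measurable_compose[OF measurable_fst meas_comp_fst])
    have m2: "(\<lambda>q. snd (fst q)) \<in> measurable ((PiM (insert b {a}) (\<lambda>_. M) \<Otimes>\<^sub>M M) \<Otimes>\<^sub>M M) M"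
      by (intro measurable_compose[OF measurable_fst measurable_snd])
    have bmG: "bm (PiM (insert b {a}) (\<lambda>_. M)) (\<lambda>x. \<integral>z. \<integral>w. H (x a) (x b) z w \<partial>M \<partial>M)"
      by (rule bm_integral_gen[OF M], rule bm_integral_gen[OF M], rule bm4_comp[OF hyp0])
        (auto intro!: m1 m2 measurable_snd)
    have "(\<integral>x. \<integral>z. \<integral>w. H (x a) (x b) z w \<partial>M \<partial>M \<partial>PiM (insert b {a}) (\<lambda>_. M)) =
        (\<integral>x. \<integral>y. \<integral>z. \<integral>w. H ((x(b := y)) a) ((x(b := y)) b) z w \<partial>M \<partial>M \<partial>M \<partial>PiM {a} (\<lambda>_. M))"
    proof -
      have "integrable (PiM (insert b {a}) (\<lambda>_. M)) (\<lambda>x. \<integral>z. \<integral>w. H (x a) (x b) z w \<partial>M \<partial>M)"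
        by (rule bm_integrable[OF fmJ bmG]) simp
      then show ?thesis using st by (intro PP.product_integral_insert) auto
    qed
    then show ?thesis using st by simp
  qed
  also have "\<dots> = (\<integral>x. \<integral>y. \<integral>z. \<integral>w. H x y z w \<partial>M \<partial>M \<partial>M \<partial>M)"
  proof (rule PP.product_integral_singleton)
    have m: "(\<lambda>q. fst (fst (fst q))) \<in> measurable (((M \<Otimes>\<^sub>M M) \<Otimes>\<^sub>M M) \<Otimes>\<^sub>M M) M"
      "(\<lambda>q. snd (fst (fst q))) \<in> measurable (((M \<Otimes>\<^sub>M M) \<Otimes>\<^sub>M M) \<Otimes>\<^sub>M M) M"
      "(\<lambda>q. snd (fst q)) \<in> measurable (((M \<Otimes>\<^sub>M M) \<Otimes>\<^sub>M M) \<Otimes>\<^sub>M M) M"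
      by measurable
    have "bm M (\<lambda>x. \<integral>y. \<integral>z. \<integral>w. H x y z w \<partial>M \<partial>M \<partial>M)"
      by (rule bm_integral_gen[OF M], rule bm_integral_gen[OF M], rule bm_integral_gen[OF M], rule bm4_comp[OF hyp0])
        (auto intro!: m measurable_snd)
    then show "(\<lambda>x. \<integral>y. \<integral>z. \<integral>w. H x y z w \<partial>M \<partial>M \<partial>M) \<in> borel_measurable M" unfolding bm_def by simp
  qed
  finally show ?thesis .
qed

context S begin

definition S3 where "S3 k l = Sg1 k l - 2 * G k l"
definition D where "D x y k l = e x y k * e x y l - S3 k l"

lemma e_swap: "e y x k = - e x y k"
  unfolding e_def sgnv_swap[of y x] by simp
lemma D_swap: "D y x k l = D x y k l"
  unfolding D_def using e_swap[of x y k] e_swap[of x y l] by simp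

lemma abs_e: "\<bar>e x y k\<bar> \<le> 3"
  unfolding e_def using abs_sgnv[of x y k] abs_A[of x k] abs_A[of y k] by linarith

lemma abs_ee: "\<bar>e x y k * e x y l\<bar> \<le> 9"
proof -
  have "\<bar>e x y k * e x y l\<bar> \<le> 3 * 3" unfolding abs_mult
    by (intro mult_mono abs_e) auto
  then show ?thesis by simp
qed

lemma abs_S3: "\<bar>S3 k l\<bar> \<le> 9"
proof -
  have "\<bar>\<integral>x. \<integral>y. e x y k * e x y l \<partial>M \<partial>M\<bar> \<le> 9"
  proof (rule abs_int_le)
    fix x show "\<bar>\<integral>y. e x y k * e x y l \<partial>M\<bar> \<le> 9" by (rule abs_int_le) (simp_all add: abs_ee)
  qed simp
  then show ?thesis unfolding S3_def F1 .
qed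

lemma abs_D: "\<bar>D x y k l\<bar> \<le> 18"
  unfolding D_def using abs_ee[of x y k l] abs_S3[of k l] by linarith

lemma bm_D[simp]: "f \<in> measurable N M \<Longrightarrow> g \<in> measurable N M \<Longrightarrow> bm N (\<lambda>w. D (f w) (g w) k l)"
  unfolding D_def by simp

lemma bm_D1[simp]: "g \<in> measurable N M \<Longrightarrow> bm N (\<lambda>w. D x (g w) k l)"
  unfolding D_def by simp

lemma intD: "(\<integral>z. \<integral>w. D z w k l \<partial>M \<partial>M) = 0"
proof -
  have "(\<integral>z. \<integral>w. D z w k l \<partial>M \<partial>M) = (\<integral>z. (\<integral>w. e z w k * e z w l \<partial>M) - S3 k l \<partial>M)"
    unfolding D_def by (simp add: int_const)
  also have "\<dots> = 0" by (simp add: int_const F1 S3_def)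
  finally show ?thesis .
qed

lemma intD_K: "(\<integral>z. D x z k l \<partial>M) = K x k l - S3 k l"
  unfolding D_def K_def by (simp add: int_const)

abbreviation Pn :: "nat \<Rightarrow> (nat \<Rightarrow> nat \<Rightarrow> real) measure" where "Pn n \<equiv> PiM {..<n} (\<lambda>_. M)"

lemma meas_X[simp]: "i < n \<Longrightarrow> (\<lambda>X. X i) \<in> measurable (Pn n) M"
  by (rule measurable_component_singleton) simp

lemma ps_Pn: "prob_space (Pn n)" using prob_space_PiM[of "{..<n}" "\<lambda>_. M"] prob_space_axioms by simp
lemma fm_Pn[simp]: "finite_measure (Pn n)" using ps_Pn prob_space.finite_measure by blast

lemma share:
  assumes st: "s < n" "t < n" "u < n" "s \<noteq> t" "s \<noteq> u" "t \<noteq> u"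
  shows "(\<integral>X. (\<Sum>k<P. \<Sum>l<P. D (X s) (X t) k l * D (X s) (X u) k l) \<partial>Pn n)
     = (\<integral>x. (\<Sum>k<P. \<Sum>l<P. (K x k l - S3 k l)\<^sup>2) \<partial>M)"
proof -
  have "(\<integral>X. (\<Sum>k<P. \<Sum>l<P. D (X s) (X t) k l * D (X s) (X u) k l) \<partial>Pn n)
     = (\<integral>x. \<integral>y. \<integral>z. (\<Sum>k<P. \<Sum>l<P. D x y k l * D x z k l) \<partial>M \<partial>M \<partial>M)"
    by (rule marg3[where H="\<lambda>x y z. \<Sum>k<P. \<Sum>l<P. D x y k l * D x z k l"]) (simp_all add: st prob_space_axioms)
  also have "\<dots> = (\<integral>x. (\<Sum>k<P. \<Sum>l<P. (K x k l - S3 k l)\<^sup>2) \<partial>M)"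
    by (simp add: intD_K power2_eq_square mult.commute)
  finally show ?thesis .
qed

lemma disj:
  assumes st: "a1 < n" "a2 < n" "a3 < n" "a4 < n" "a1 \<noteq> a2" "a1 \<noteq> a3" "a1 \<noteq> a4" "a2 \<noteq> a3" "a2 \<noteq> a4" "a3 \<noteq> a4"
  shows "(\<integral>X. (\<Sum>k<P. \<Sum>l<P. D (X a1) (X a2) k l * D (X a3) (X a4) k l) \<partial>Pn n) = 0"
proof -
  have "(\<integral>X. (\<Sum>k<P. \<Sum>l<P. D (X a1) (X a2) k l * D (X a3) (X a4) k l) \<partial>Pn n)
     = (\<integral>x. \<integral>y. \<integral>z. \<integral>w. (\<Sum>k<P. \<Sum>l<P. D x y k l * D z w k l) \<partial>M \<partial>M \<partial>M \<partial>M)"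
    by (rule marg4[where H="\<lambda>x y z w. \<Sum>k<P. \<Sum>l<P. D x y k l * D z w k l"]) (simp_all add: st prob_space_axioms)
  also have "\<dots> = 0"
    by (simp add: intD)
  finally show ?thesis .
qed

lemma equal_bound: assumes "i < n" "j < n" shows
  "(\<integral>X. (\<Sum>k<P. \<Sum>l<P. D (X i) (X j) k l * D (X i) (X j) k l) \<partial>Pn n) \<le> 324 * (real P)\<^sup>2"
proof -
  interpret PN: prob_space "Pn n" by (rule ps_Pn)
  have "\<bar>\<Sum>k<P. \<Sum>l<P. D (X i) (X j) k l * D (X i) (X j) k l\<bar> \<le> 324 * (real P)\<^sup>2" for X
  proof -
    have "\<bar>\<Sum>k<P. \<Sum>l<P. D (X i) (X j) k l * D (X i) (X j) k l\<bar> \<le> (\<Sum>k<P. \<Sum>l<P. \<bar>D (X i) (X j) k l * D (X i) (X j) k l\<bar>)"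
      by (rule order_trans[OF sum_abs sum_mono[OF sum_abs]])
    also have "\<dots> \<le> (\<Sum>k<P. \<Sum>l<P. 18 * 18)"
      unfolding abs_mult by (intro sum_mono mult_mono abs_D) auto
    finally show ?thesis by (simp add: power2_eq_square)
  qed
  then show ?thesis
    using assms by (intro PN.integral_le_const AE_I2) (auto simp: abs_le_iff)
qed

end

lemma swap4: "(\<Sum>k\<in>A. \<Sum>l\<in>B. \<Sum>p\<in>C. \<Sum>q\<in>E. f k l p q) = (\<Sum>p\<in>C. \<Sum>q\<in>E. \<Sum>k\<in>A. \<Sum>l\<in>B. f k l p q)"
proof -
  have "(\<Sum>k\<in>A. \<Sum>l\<in>B. \<Sum>p\<in>C. \<Sum>q\<in>E. f k l p q) = (\<Sum>k\<in>A. \<Sum>p\<in>C. \<Sum>l\<in>B. \<Sum>q\<in>E. f k l p q)"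
    by (rule sum.cong[OF refl], rule sum.swap)
  also have "\<dots> = (\<Sum>k\<in>A. \<Sum>p\<in>C. \<Sum>q\<in>E. \<Sum>l\<in>B. f k l p q)"
    by (intro sum.cong refl, rule sum.swap)
  also have "\<dots> = (\<Sum>p\<in>C. \<Sum>k\<in>A. \<Sum>q\<in>E. \<Sum>l\<in>B. f k l p q)"
    by (rule sum.swap)
  also have "\<dots> = (\<Sum>p\<in>C. \<Sum>q\<in>E. \<Sum>k\<in>A. \<Sum>l\<in>B. f k l p q)"
    by (intro sum.cong refl, rule sum.swap)
  finally show ?thesis .
qed

lemma gauss_real: "(\<Sum>j<n. real j) = real n * (real n - 1) / 2"
  by (induction n) (simp_all add: field_simps)

definition Pr :: "nat \<Rightarrow> (nat \<times> nat) set" where "Pr n = Sigma {..<n} (\<lambda>j. {..<j})"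

lemma finite_Pr[simp]: "finite (Pr n)" unfolding Pr_def by auto
lemma Pr_mem: "p \<in> Pr n \<Longrightarrow> snd p < fst p \<and> fst p < n" unfolding Pr_def by auto
lemma Pr_sub: "Pr n \<subseteq> {..<n} \<times> {..<n}" unfolding Pr_def by auto
lemma card_Pr: "real (card (Pr n)) = real n * (real n - 1) / 2"
proof -
  have "card (Pr n) = (\<Sum>j<n. card {..<j})" unfolding Pr_def by (rule card_SigmaI) auto
  then have "real (card (Pr n)) = (\<Sum>j<n. real j)" by simp
  then show ?thesis by (simp add: gauss_real)
qed
lemma card_Pr_le: "card (Pr n) \<le> n * n"
proof -
  have "card (Pr n) \<le> card ({..<n} \<times> {..<n})" by (rule card_mono) (auto simp: Pr_sub)
  then show ?thesis by (simp add: card_cartesian_product)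
qed

lemma sum_Pr: "(\<Sum>j<n. \<Sum>i<j. f i j) = (\<Sum>p\<in>Pr n. f (snd p) (fst p))"
  unfolding Pr_def by (subst sum.Sigma) (auto simp: split_beta)

definition ind :: "bool \<Rightarrow> real" where "ind b = (if b then 1 else 0)"
lemma ind_nonneg[simp]: "0 \<le> ind b" unfolding ind_def by simp

lemma cnt_fst: "(\<Sum>q\<in>Pr n. ind (fst q = a)) \<le> n"
proof -
  have "(\<Sum>q\<in>Pr n. ind (fst q = a)) \<le> (\<Sum>q\<in>{..<n} \<times> {..<n}. ind (fst q = a))"
    by (rule sum_mono2) (auto simp: Pr_sub)
  also have "\<dots> = (\<Sum>j<n. \<Sum>i<n. ind (j = a))"
    by (subst sum.cartesian_product) (simp add: split_beta)
  also have "\<dots> = (\<Sum>j<n. real n * ind (j = a))" by simp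
  also have "\<dots> = real n * (\<Sum>j<n. ind (j = a))" by (simp add: sum_distrib_left)
  also have "\<dots> \<le> real n * 1"
    by (intro mult_left_mono) (simp_all add: ind_def sum.delta)
  finally show ?thesis by simp
qed

lemma cnt_snd: "(\<Sum>q\<in>Pr n. ind (snd q = a)) \<le> n"
proof -
  have "(\<Sum>q\<in>Pr n. ind (snd q = a)) \<le> (\<Sum>q\<in>{..<n} \<times> {..<n}. ind (snd q = a))"
    by (rule sum_mono2) (auto simp: Pr_sub)
  also have "\<dots> = (\<Sum>j<n. \<Sum>i<n. ind (i = a))"
    by (subst sum.cartesian_product) (simp add: split_beta)
  also have "\<dots> \<le> (\<Sum>j<n. 1)"
    by (intro sum_mono) (simp add: ind_def sum.delta)
  finally show ?thesis by simp
qed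

lemma cnt_eq: "p \<in> Pr n \<Longrightarrow> (\<Sum>q\<in>Pr n. ind (p = q)) = 1"
  unfolding ind_def by (simp add: sum.delta)

context S begin

definition cc :: "nat \<Rightarrow> real" where "cc n = 2 / (real n * (real n - 1))"

lemma epsv_e: "epsv P M X i j k = e (X i) (X j) k"
  unfolding epsv_def e_def ..

lemma M3_eq: assumes n: "n \<ge> 2"
  shows "M3 n P M X k l - Sigma3 P M k l = cc n * (\<Sum>p\<in>Pr n. D (X (snd p)) (X (fst p)) k l)"
proof -
  have pos: "real n * (real n - 1) > 0" using n by simp
  have c1: "cc n * real (card (Pr n)) = 1" unfolding cc_def card_Pr using pos n by (simp add: field_simps)
  have "M3 n P M X k l = cc n * (\<Sum>p\<in>Pr n. e (X (snd p)) (X (fst p)) k * e (X (snd p)) (X (fst p)) l)"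
    unfolding M3_def cc_def epsv_e sum_Pr ..
  moreover have "(\<Sum>p\<in>Pr n. D (X (snd p)) (X (fst p)) k l) =
      (\<Sum>p\<in>Pr n. e (X (snd p)) (X (fst p)) k * e (X (snd p)) (X (fst p)) l) - real (card (Pr n)) * S3 k l"
    unfolding D_def by (simp add: sum_subtractf)
  moreover have "Sigma3 P M k l = S3 k l" unfolding Sigma3_eq S3_def ..
  ultimately show ?thesis using c1 by (simp add: right_diff_distrib mult.assoc[symmetric])
qed

lemma sq_sum: fixes c :: real shows "(c * sum f Q)\<^sup>2 = c\<^sup>2 * (\<Sum>p\<in>Q. \<Sum>q\<in>Q. f p * f q)"
  by (simp only: power_mult_distrib power2_eq_square[of "sum f Q"] sum_product)

lemma frob_expand:
  "frob_sq P (\<lambda>k l. c * (\<Sum>p\<in>Q. a p k l)) =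
     c\<^sup>2 * (\<Sum>p\<in>Q. \<Sum>q\<in>Q. \<Sum>k<P. \<Sum>l<P. a p k l * a q k l)"
proof -
  have "frob_sq P (\<lambda>k l. c * (\<Sum>p\<in>Q. a p k l)) = (\<Sum>k<P. \<Sum>l<P. c\<^sup>2 * (\<Sum>p\<in>Q. \<Sum>q\<in>Q. a p k l * a q k l))"
    unfolding frob_sq_def sq_sum ..
  also have "\<dots> = c\<^sup>2 * (\<Sum>k<P. \<Sum>l<P. \<Sum>p\<in>Q. \<Sum>q\<in>Q. a p k l * a q k l)"
    by (simp add: sum_distrib_left)
  also have "\<dots> = c\<^sup>2 * (\<Sum>p\<in>Q. \<Sum>q\<in>Q. \<Sum>k<P. \<Sum>l<P. a p k l * a q k l)"
    by (rule arg_cong[where f="\<lambda>x. c\<^sup>2 * x"], rule swap4)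
  finally show ?thesis .
qed

lemma meas_Pr[simp]: "p \<in> Pr n \<Longrightarrow> (\<lambda>X. X (fst p)) \<in> measurable (Pn n) M"
  "p \<in> Pr n \<Longrightarrow> (\<lambda>X. X (snd p)) \<in> measurable (Pn n) M"
  using Pr_mem[of p n] by (auto intro!: meas_X)

definition gp where "gp n p q = (\<integral>X. (\<Sum>k<P. \<Sum>l<P. D (X (snd p)) (X (fst p)) k l * D (X (snd q)) (X (fst q)) k l) \<partial>Pn n)"

lemma EF_eq: assumes n: "n \<ge> 2"
  shows "(\<integral>X. frob_sq P (\<lambda>k l. M3 n P M X k l - Sigma3 P M k l) \<partial>Pn n) = (cc n)\<^sup>2 * (\<Sum>p\<in>Pr n. \<Sum>q\<in>Pr n. gp n p q)"
proof -
  have "(\<integral>X. frob_sq P (\<lambda>k l. M3 n P M X k l - Sigma3 P M k l) \<partial>Pn n) =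
     (\<integral>X. (cc n)\<^sup>2 * (\<Sum>p\<in>Pr n. \<Sum>q\<in>Pr n. \<Sum>k<P. \<Sum>l<P. D (X (snd p)) (X (fst p)) k l * D (X (snd q)) (X (fst q)) k l) \<partial>Pn n)"
    unfolding M3_eq[OF n] frob_expand ..
  also have "\<dots> = (cc n)\<^sup>2 * (\<integral>X. (\<Sum>p\<in>Pr n. \<Sum>q\<in>Pr n. \<Sum>k<P. \<Sum>l<P. D (X (snd p)) (X (fst p)) k l * D (X (snd q)) (X (fst q)) k l) \<partial>Pn n)"
    by (rule integral_mult_right_zero)
  also have "(\<integral>X. (\<Sum>p\<in>Pr n. \<Sum>q\<in>Pr n. \<Sum>k<P. \<Sum>l<P. D (X (snd p)) (X (fst p)) k l * D (X (snd q)) (X (fst q)) k l) \<partial>Pn n)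
     = (\<Sum>p\<in>Pr n. (\<integral>X. (\<Sum>q\<in>Pr n. \<Sum>k<P. \<Sum>l<P. D (X (snd p)) (X (fst p)) k l * D (X (snd q)) (X (fst q)) k l) \<partial>Pn n))"
    by (rule Bochner_Integration.integral_sum) (rule bm_integrable[OF fm_Pn], simp)
  also have "\<dots> = (\<Sum>p\<in>Pr n. \<Sum>q\<in>Pr n. gp n p q)"
    unfolding gp_def
    by (intro sum.cong refl Bochner_Integration.integral_sum) (rule bm_integrable[OF fm_Pn], simp)
  finally show ?thesis .
qed

end

context S begin

lemma pair_bound:
  assumes Tb0: "0 \<le> Tb" and Tb: "(\<integral>x. (\<Sum>k<P. \<Sum>l<P. (K x k l - S3 k l)\<^sup>2) \<partial>M) \<le> Tb"
    and p: "p \<in> Pr n" and q: "q \<in> Pr n"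
  shows "gp n p q \<le> 324 * (real P)\<^sup>2 * ind (p = q)
     + Tb * (ind (fst q = fst p) + ind (snd q = snd p) + ind (snd q = fst p) + ind (fst q = snd p))"
    (is "_ \<le> ?R")
proof -
  obtain j i where pji: "p = (j, i)" "i < j" "j < n" using p unfolding Pr_def by auto
  obtain j' i' where qji: "q = (j', i')" "i' < j'" "j' < n" using q unfolding Pr_def by auto
  have R1: "324 * (real P)\<^sup>2 * ind (p = q) \<le> ?R" using Tb0 by simp
  have R2: "Tb \<le> ?R" if "fst q = fst p \<or> snd q = snd p \<or> snd q = fst p \<or> fst q = snd p"
  proof -
    have "1 \<le> ind (fst q = fst p) + ind (snd q = snd p) + ind (snd q = fst p) + ind (fst q = snd p)"
      using that unfolding ind_def by auto
    then have "Tb * 1 \<le> Tb * (ind (fst q = fst p) + ind (snd q = snd p) + ind (snd q = fst p) + ind (fst q = snd p))"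
      using Tb0 by (intro mult_left_mono) auto
    moreover have "0 \<le> 324 * (real P)\<^sup>2 * ind (p = q)" by simp
    ultimately show ?thesis by linarith
  qed
  have g: "gp n p q = (\<integral>X. (\<Sum>k<P. \<Sum>l<P. D (X i) (X j) k l * D (X i') (X j') k l) \<partial>Pn n)"
    unfolding gp_def pji qji by simp
  show ?thesis
  proof (cases "p = q")
    case True
    then have "i' = i" "j' = j" using pji qji by auto
    then have "gp n p q = (\<integral>X. (\<Sum>k<P. \<Sum>l<P. D (X i) (X j) k l * D (X i) (X j) k l) \<partial>Pn n)"
      unfolding g by simp
    also have "\<dots> \<le> 324 * (real P)\<^sup>2" using pji by (intro equal_bound) auto
    finally have "gp n p q \<le> 324 * (real P)\<^sup>2" .
    then show ?thesis using R1 True by (simp add: ind_def)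
  next
    case False
    show ?thesis
    proof (cases "j' = j")
      case True
      then have ii: "i \<noteq> i'" using False pji qji by auto
      have "gp n p q = (\<integral>X. (\<Sum>k<P. \<Sum>l<P. D (X j) (X i) k l * D (X j) (X i') k l) \<partial>Pn n)"
        unfolding g True by (intro Bochner_Integration.integral_cong refl sum.cong) (simp add: D_swap)
      also have "\<dots> = (\<integral>x. (\<Sum>k<P. \<Sum>l<P. (K x k l - S3 k l)\<^sup>2) \<partial>M)"
        using pji qji ii True by (intro share) auto
      finally have "gp n p q \<le> Tb" using Tb by simp
      then show ?thesis using R2 pji qji True by auto
    next
      case jj: False
      show ?thesis
      proof (cases "i' = i")
        case True
        have "gp n p q = (\<integral>x. (\<Sum>k<P. \<Sum>l<P. (K x k l - S3 k l)\<^sup>2) \<partial>M)"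
          unfolding g True using pji qji jj True by (intro share) auto
        then have "gp n p q \<le> Tb" using Tb by simp
        then show ?thesis using R2 pji qji True by auto
      next
        case ii: False
        show ?thesis
        proof (cases "i' = j")
          case True
          have "gp n p q = (\<integral>X. (\<Sum>k<P. \<Sum>l<P. D (X j) (X i) k l * D (X j) (X j') k l) \<partial>Pn n)"
            unfolding g True by (intro Bochner_Integration.integral_cong refl sum.cong) (simp add: D_swap)
          also have "\<dots> = (\<integral>x. (\<Sum>k<P. \<Sum>l<P. (K x k l - S3 k l)\<^sup>2) \<partial>M)"
            using pji qji True by (intro share) auto
          finally have "gp n p q \<le> Tb" using Tb by simp
          then show ?thesis using R2 pji qji True by auto
        next
          case ij: False
          show ?thesis
          proof (cases "j' = i")
            case True
            have "gp n p q = (\<integral>X. (\<Sum>k<P. \<Sum>l<P. D (X i) (X j) k l * D (X i) (X i') k l) \<partial>Pn n)"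
              unfolding g True by (intro Bochner_Integration.integral_cong refl sum.cong) (simp add: D_swap)
            also have "\<dots> = (\<integral>x. (\<Sum>k<P. \<Sum>l<P. (K x k l - S3 k l)\<^sup>2) \<partial>M)"
              using pji qji True by (intro share) auto
            finally have "gp n p q \<le> Tb" using Tb by simp
            then show ?thesis using R2 pji qji True by auto
          next
            case ji: False
            have "gp n p q = 0" unfolding g using pji qji jj ii ij ji by (intro disj) auto
            moreover have "0 \<le> ?R" using Tb0 by simp
            ultimately show ?thesis by simp
          qed
        qed
      qed
    qed
  qed
qed

lemma Ubound:
  assumes n: "n \<ge> 2" and Tb0: "0 \<le> Tb" and Tb: "(\<integral>x. (\<Sum>k<P. \<Sum>l<P. (K x k l - S3 k l)\<^sup>2) \<partial>M) \<le> Tb"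
  shows "(\<integral>X. frob_sq P (\<lambda>k l. M3 n P M X k l - Sigma3 P M k l) \<partial>Pn n)
     \<le> (cc n)\<^sup>2 * (real n * real n) * (324 * (real P)\<^sup>2 + 4 * Tb * real n)"
proof -
  let ?R = "\<lambda>p q. 324 * (real P)\<^sup>2 * ind (p = q)
     + Tb * (ind (fst q = fst p) + ind (snd q = snd p) + ind (snd q = fst p) + ind (fst q = snd p))"
  have inner: "(\<Sum>q\<in>Pr n. ?R p q) \<le> 324 * (real P)\<^sup>2 + 4 * Tb * real n" if p: "p \<in> Pr n" for p
  proof -
    have "(\<Sum>q\<in>Pr n. ?R p q) = 324 * (real P)\<^sup>2 * (\<Sum>q\<in>Pr n. ind (p = q))
       + Tb * ((\<Sum>q\<in>Pr n. ind (fst q = fst p)) + (\<Sum>q\<in>Pr n. ind (snd q = snd p))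
          + (\<Sum>q\<in>Pr n. ind (snd q = fst p)) + (\<Sum>q\<in>Pr n. ind (fst q = snd p)))"
      by (simp add: sum.distrib sum_distrib_left distrib_left)
    also have "\<dots> \<le> 324 * (real P)\<^sup>2 * 1 + Tb * (real n + real n + real n + real n)"
      using cnt_eq[OF p] cnt_fst[where n=n and a="fst p"] cnt_snd[where n=n and a="snd p"] cnt_snd[where n=n and a="fst p"] cnt_fst[where n=n and a="snd p"] Tb0
      by (intro add_mono mult_left_mono) auto
    finally show ?thesis by simp
  qed
  have "(\<integral>X. frob_sq P (\<lambda>k l. M3 n P M X k l - Sigma3 P M k l) \<partial>Pn n) = (cc n)\<^sup>2 * (\<Sum>p\<in>Pr n. \<Sum>q\<in>Pr n. gp n p q)"
    by (rule EF_eq[OF n])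
  also have "\<dots> \<le> (cc n)\<^sup>2 * (\<Sum>p\<in>Pr n. \<Sum>q\<in>Pr n. ?R p q)"
    by (intro mult_left_mono sum_mono pair_bound[OF Tb0 Tb]) auto
  also have "\<dots> \<le> (cc n)\<^sup>2 * (\<Sum>p\<in>Pr n. 324 * (real P)\<^sup>2 + 4 * Tb * real n)"
    by (intro mult_left_mono sum_mono inner) auto
  also have "\<dots> = (cc n)\<^sup>2 * (real (card (Pr n)) * (324 * (real P)\<^sup>2 + 4 * Tb * real n))"
    by simp
  also have "\<dots> \<le> (cc n)\<^sup>2 * ((real n * real n) * (324 * (real P)\<^sup>2 + 4 * Tb * real n))"
  proof -
    have "real (card (Pr n)) \<le> real n * real n" using card_Pr_le[of n] by (metis of_nat_le_iff of_nat_mult)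
    then show ?thesis using Tb0 by (intro mult_left_mono mult_right_mono) auto
  qed
  finally show ?thesis by (simp add: mult.assoc)
qed

end

lemma alg_id:
  fixes x d p V K :: real
  assumes "x \<noteq> 0" "d \<noteq> 0" "p > 0"
  shows "(1 / p) * ((2 / (x * d))\<^sup>2 * (x * x) * (324 * p\<^sup>2 + 4 * (64 * V + 36 * K * p) * x))
    = 1296 * (p / x) * (x / d\<^sup>2) + 1024 * (V / p\<^sup>2) * (p / x) * (x\<^sup>2 / d\<^sup>2) + 576 * K * (x / d\<^sup>2)"
  using assms by (simp add: field_simps power2_eq_square)

context S begin

lemma final_bound:
  assumes n: "n \<ge> 2" and P: "P > 0" and C: "spec_norm P (Sigma1 P M) \<le> C"
  shows "(1 / real P) * (\<integral>X. frob_sq P (\<lambda>k l. M3 n P M X k l - Sigma3 P M k l) \<partial>Pn n)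
     \<le> 1296 * (real P / real n) * (real n / (real n - 1)\<^sup>2)
       + 1024 * (varA P M / (real P)\<^sup>2) * (real P / real n) * ((real n)\<^sup>2 / (real n - 1)\<^sup>2)
       + 576 * max C 1 * (real n / (real n - 1)\<^sup>2)"
proof -
  define Tb where "Tb = 64 * varA P M + 36 * max C 1 * real P"
  have TbI: "(\<integral>x. (\<Sum>k<P. \<Sum>l<P. (K x k l - S3 k l)\<^sup>2) \<partial>M) \<le> Tb"
    using Tfinal[OF P C] unfolding Tb_def S3_def .
  have "0 \<le> (\<integral>x. (\<Sum>k<P. \<Sum>l<P. (K x k l - S3 k l)\<^sup>2) \<partial>M)"
    by (intro integral_nonneg_AE AE_I2 sum_nonneg) auto
  with TbI have Tb0: "0 \<le> Tb" by linarith
  have U: "(\<integral>X. frob_sq P (\<lambda>k l. M3 n P M X k l - Sigma3 P M k l) \<partial>Pn n)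
     \<le> (cc n)\<^sup>2 * (real n * real n) * (324 * (real P)\<^sup>2 + 4 * Tb * real n)"
    by (rule Ubound[OF n Tb0 TbI])
  have Pp: "real P > 0" using P by simp
  have "(1 / real P) * (\<integral>X. frob_sq P (\<lambda>k l. M3 n P M X k l - Sigma3 P M k l) \<partial>Pn n)
     \<le> (1 / real P) * ((cc n)\<^sup>2 * (real n * real n) * (324 * (real P)\<^sup>2 + 4 * Tb * real n))"
    using U Pp by (intro mult_left_mono) auto
  also have "\<dots> = 1296 * (real P / real n) * (real n / (real n - 1)\<^sup>2)
       + 1024 * (varA P M / (real P)\<^sup>2) * (real P / real n) * ((real n)\<^sup>2 / (real n - 1)\<^sup>2)
       + 576 * max C 1 * (real n / (real n - 1)\<^sup>2)"
  proof -
    have n0: "real n \<noteq> 0" "real n - 1 \<noteq> 0" using n by auto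
    show ?thesis unfolding cc_def Tb_def
      using alg_id[OF n0 Pp, of "varA P M" "max C 1"] by simp
  qed
  finally show ?thesis .
qed

end

lemma lim_aux:
  assumes r: "r \<longlonglongrightarrow> c" and v: "v \<longlonglongrightarrow> 0"
  shows "(\<lambda>n. 1296 * r n * (real n / (real n - 1)\<^sup>2)
       + 1024 * v n * r n * ((real n)\<^sup>2 / (real n - 1)\<^sup>2)
       + 576 * K * (real n / (real n - 1)\<^sup>2)) \<longlonglongrightarrow> 0"
proof -
  have w: "(\<lambda>n. real n / (real n - 1)\<^sup>2) \<longlonglongrightarrow> 0" by real_asymp
  have u: "(\<lambda>n. (real n)\<^sup>2 / (real n - 1)\<^sup>2) \<longlonglongrightarrow> 1" by real_asymp
  have "(\<lambda>n. 1296 * r n * (real n / (real n - 1)\<^sup>2)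
       + 1024 * v n * r n * ((real n)\<^sup>2 / (real n - 1)\<^sup>2)
       + 576 * K * (real n / (real n - 1)\<^sup>2)) \<longlonglongrightarrow> 1296 * c * 0 + 1024 * 0 * c * 1 + 576 * K * 0"
    by (intro tendsto_intros r v w u)
  then show ?thesis by simp
qed

theorem lemma3:
  fixes p :: "nat \<Rightarrow> nat" and \<mu> :: "nat \<Rightarrow> (nat \<Rightarrow> real) measure"
    and C c :: real
  assumes prob: "\<And>n. prob_space (\<mu> n)"
    and sets: "\<And>n. sets (\<mu> n) = sets (Rp (p n))"
    and abscont: "\<And>n. absolutely_continuous (Rp (p n)) (\<mu> n)"
    and ppos: "\<And>n. p n > 0"
    and normC: "\<And>n. spec_norm (p n) (Sigma1 (p n) (\<mu> n)) \<le> C"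
    and varcond: "(\<lambda>n. varA (p n) (\<mu> n) / (real (p n))\<^sup>2) \<longlonglongrightarrow> 0"
    and pinf: "filterlim p at_top sequentially"
    and cpos: "0 < c"
    and ratio: "(\<lambda>n. real (p n) / real n) \<longlonglongrightarrow> c"
  shows "(\<lambda>n. (1 / real (p n)) *
            (\<integral>X. frob_sq (p n) (\<lambda>k l. M3 n (p n) (\<mu> n) X k l - Sigma3 (p n) (\<mu> n) k l)
               \<partial>(PiM {..<n} (\<lambda>_. \<mu> n)))) \<longlonglongrightarrow> 0"
proof -
  define ua where "ua n = (1 / real (p n)) *
            (\<integral>X. frob_sq (p n) (\<lambda>k l. M3 n (p n) (\<mu> n) X k l - Sigma3 (p n) (\<mu> n) k l)
               \<partial>(PiM {..<n} (\<lambda>_. \<mu> n)))" for n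
  define ub where "ub n = 1296 * (real (p n) / real n) * (real n / (real n - 1)\<^sup>2)
       + 1024 * (varA (p n) (\<mu> n) / (real (p n))\<^sup>2) * (real (p n) / real n) * ((real n)\<^sup>2 / (real n - 1)\<^sup>2)
       + 576 * max C 1 * (real n / (real n - 1)\<^sup>2)" for n
  have ubl: "ub \<longlonglongrightarrow> 0" unfolding ub_def by (rule lim_aux[OF ratio varcond])
  have ab: "ua n \<le> ub n" if n: "n \<ge> 2" for n
  proof -
    interpret S "\<mu> n" "p n" by (rule S.intro[OF prob S_axioms.intro[OF sets]])
    show ?thesis unfolding ua_def ub_def using final_bound[OF n ppos normC] by simp
  qed
  have a0: "0 \<le> ua n" for n
    unfolding ua_def frob_sq_def
    by (intro mult_nonneg_nonneg integral_nonneg_AE AE_I2 sum_nonneg) auto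
  have "ua \<longlonglongrightarrow> 0"
  proof (rule tendsto_sandwich[of "\<lambda>_. 0" ua sequentially ub 0])
    show "\<forall>\<^sub>F n in sequentially. 0 \<le> ua n" using a0 by simp
    show "\<forall>\<^sub>F n in sequentially. ua n \<le> ub n" using ab eventually_sequentially by blast
  qed (simp_all add: ubl)
  then show ?thesis unfolding ua_def .
qed

end
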